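(* For every $n\geq0$, the map $\phi:\mathsf{Sh}_n\to\mathcal{I}_{n+1}(1234,1243)$ defined below is well defined (its image consists of involutions of $[n+1]$ avoiding both $1234$ and $1243$) and is a bijection.
   Context: A Schröder path of length $2n$ is a lattice path from $(0,0)$ to $(2n,0)$ with steps $\mathsf{h}=(2,0)$, $\mathsf{u}=(1,1)$, $\mathsf{d}=(1,-1)$ never going below the $x$-axis; it is symmetric if it is symmetric about the line $x=n$. $\mathsf{Sh}_n$ is the set of symmetric Schröder paths of length $2n$. Involutions, pattern avoidance and $\mathcal{I}_m(T)$ (involutions of $[m]$ avoiding every pattern in $T$) are as usual. The map $\phi$: given $p\in\mathsf{Sh}_n$ (as a word in $\mathsf{u},\mathsf{d},\mathsf{h}$), form the word $p'$ by appending a letter $\mathsf{h}$ at the end, replacing every factor $\mathsf{u}\mathsf{d}$ by a letter $\mathsf{r}$, and deleting all remaining $\mathsf{d}$'s; $p'=p_1\cdots p_{n+1}\in\{\mathsf{u},\mathsf{r},\mathsf{h}\}^{n+1}$. For $x\in\{\mathsf{h},\mathsf{r},\mathsf{u}\}$ let $A_x=\{i: p_i=x\}$. For each $x$, if $A_x=\{i_1<\dots<i_\ell\}$, set $\pi_{i_j}=i_{\ell+1-j}$ for $1\le j\le\ell$. Then $\phi(p)=\pi=\pi_1\cdots\pi_{n+1}$. *)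

theory Defs
  imports "HOL-Combinatorics.Permutations"
begin

datatype step = U | D | H

fun step_width :: "step \<Rightarrow> nat" where
  "step_width U = 1" | "step_width D = 1" | "step_width H = 2"

fun step_rise :: "step \<Rightarrow> int" where
  "step_rise U = 1" | "step_rise D = -1" | "step_rise H = 0"

definition height :: "step list \<Rightarrow> int" where
  "height p = sum_list (map step_rise p)"

definition schroeder :: "nat \<Rightarrow> step list \<Rightarrow> bool" where
  "schroeder n p \<longleftrightarrow> sum_list (map step_width p) = 2 * n \<and> height p = 0 \<and>
     (\<forall>k \<le> length p. height (take k p) \<ge> 0)"

(* reflection in a vertical line: reverse the word and swap u and d *)
fun flip_step :: "step \<Rightarrow> step" where
  "flip_step U = D" | "flip_step D = U" | "flip_step H = H"

definition mirror :: "step list \<Rightarrow> step list" where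
  "mirror p = rev (map flip_step p)"

definition symmetric_path :: "step list \<Rightarrow> bool" where
  "symmetric_path p \<longleftrightarrow> mirror p = p"

definition Sh :: "nat \<Rightarrow> step list set" where
  "Sh n = {p. schroeder n p \<and> symmetric_path p}"

datatype letter = Lu | Lr | Lh

fun compress :: "step list \<Rightarrow> letter list" where
  "compress [] = []"
| "compress (U # D # xs) = Lr # compress xs"
| "compress (U # xs) = Lu # compress xs"
| "compress (D # xs) = compress xs"
| "compress (H # xs) = Lh # compress xs"

definition word' :: "step list \<Rightarrow> letter list" where
  "word' p = compress (p @ [H])"

(* A_x as increasing list of 1-based positions *)
definition positions :: "letter list \<Rightarrow> letter \<Rightarrow> nat list" where
  "positions q x = filter (\<lambda>i. q ! (i - 1) = x) [1..<length q + 1]"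

(* pi_{i_j} = i_{l+1-j}; identity outside [length q] *)
definition phi :: "step list \<Rightarrow> nat \<Rightarrow> nat" where
  "phi p i = (let q = word' p in
     if i \<in> {1..length q} then
       (let A = positions q (q ! (i - 1)); j = length (filter (\<lambda>k. k < i) A)
        in rev A ! j)
     else i)"

definition contains_pattern :: "nat \<Rightarrow> (nat \<Rightarrow> nat) \<Rightarrow> nat list \<Rightarrow> bool" where
  "contains_pattern m \<pi> \<sigma> \<longleftrightarrow>
     (\<exists>f :: nat \<Rightarrow> nat. strict_mono_on {..<length \<sigma>} f \<and> (\<forall>a < length \<sigma>. f a \<in> {1..m}) \<and>
        (\<forall>a < length \<sigma>. \<forall>b < length \<sigma>. \<pi> (f a) < \<pi> (f b) \<longleftrightarrow> \<sigma> ! a < \<sigma> ! b))"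

definition avoids :: "nat \<Rightarrow> (nat \<Rightarrow> nat) \<Rightarrow> nat list \<Rightarrow> bool" where
  "avoids m \<pi> \<sigma> \<longleftrightarrow> \<not> contains_pattern m \<pi> \<sigma>"

definition Inv_avoid :: "nat \<Rightarrow> nat list set \<Rightarrow> (nat \<Rightarrow> nat) set" where
  "Inv_avoid m T = {\<pi>. \<pi> permutes {1..m} \<and> (\<forall>i. \<pi> (\<pi> i) = i) \<and> (\<forall>\<sigma>\<in>T. avoids m \<pi> \<sigma>)}"

end

theory Submission
  imports Defs
begin

definition rb :: "letter list \<Rightarrow> nat \<Rightarrow> nat" where
  "rb q i = (if i \<in> {1..length q} then
       (let A = positions q (q ! (i - 1)); j = length (filter (\<lambda>k. k < i) A)
        in rev A ! j)
     else i)"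

lemma phi_rb: "phi p = rb (word' p)"
  by (rule ext) (simp add: phi_def rb_def Let_def)

lemma positions_sorted: "sorted_wrt (<) (positions q x)"
  unfolding positions_def by (intro sorted_wrt_filter sorted_wrt_upt)

lemma set_positions: "set (positions q x) = {l. 1 \<le> l \<and> l \<le> length q \<and> q!(l-1) = x}"
  unfolding positions_def by auto

lemma cnt_upt: "t \<le> length q \<Longrightarrow> count_list (take t q) x = length (filter (\<lambda>l. q!(l-1) = x) [1..<Suc t])"
proof (induction t)
  case 0 then show ?case by simp
next
  case (Suc t)
  have "take (Suc t) q = take t q @ [q!t]" using Suc.prems by (simp add: take_Suc_conv_app_nth)
  then show ?case using Suc by simp
qed

lemma cnt_take: "t \<le> length q \<Longrightarrow> count_list (take t q) x = length (filter (\<lambda>l. l < Suc t) (positions q x))"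
proof -
  assume t: "t \<le> length q"
  let ?P = "\<lambda>l. q!(l-1) = x"
  have e: "[1..<length q + 1] = [1..<Suc t] @ [Suc t..<length q + 1]"
    using upt_add_eq_append[of 1 "Suc t" "length q - t"] t by simp
  have a: "filter (\<lambda>l. l < Suc t) (positions q x) = filter (\<lambda>l. l < Suc t) (filter ?P [1..<Suc t]) @ filter (\<lambda>l. l < Suc t) (filter ?P [Suc t..<length q + 1])"
    unfolding positions_def e by simp
  have b: "filter (\<lambda>l. l < Suc t) (filter ?P [Suc t..<length q + 1]) = []"
    by (auto simp: filter_empty_conv)
  have c: "filter (\<lambda>l. l < Suc t) (filter ?P [1..<Suc t]) = filter ?P [1..<Suc t]"
    by (rule filter_True) auto
  show ?thesis using cnt_upt[OF t] a b c by simp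
qed

lemma len_positions: "length (positions q x) = count_list q x"
proof -
  have "filter (\<lambda>l. l < Suc (length q)) (positions q x) = positions q x"
    by (rule filter_True) (auto simp: set_positions)
  then show ?thesis using cnt_take[of "length q" q x] by simp
qed

lemma cnt_drop: "j \<le> length q \<Longrightarrow> count_list (drop j q) x = length (filter (\<lambda>l. j < l) (positions q x))"
proof -
  assume j: "j \<le> length q"
  have "count_list q x = count_list (take j q) x + count_list (drop j q) x"
    by (metis append_take_drop_id count_list_append)
  moreover have "length (positions q x) = length (filter (\<lambda>l. l < Suc j) (positions q x)) + length (filter (\<lambda>l. \<not> l < Suc j) (positions q x))"
    by (simp add: sum_length_filter_compl)
  moreover have "(\<lambda>l. \<not> l < Suc j) = (\<lambda>l. j < l)" by auto
  ultimately show ?thesis using cnt_take[OF j, of x] len_positions[of q x] by simp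
qed

lemma sorted_filter_less: "sorted_wrt (<) (A::nat list) \<Longrightarrow> m < length A \<Longrightarrow> length (filter (\<lambda>l. l < A!m) A) = m"
proof (induction A arbitrary: m)
  case Nil then show ?case by simp
next
  case (Cons a A)
  show ?case
  proof (cases m)
    case 0
    then show ?thesis using Cons.prems by (auto simp: filter_empty_conv)
  next
    case (Suc m')
    have "a < A!m'" using Cons.prems Suc by auto
    then show ?thesis using Cons Suc by auto
  qed
qed

lemma sorted_filter_greater: "sorted_wrt (<) (A::nat list) \<Longrightarrow> m < length A \<Longrightarrow> length (filter (\<lambda>l. A!m < l) A) = length A - 1 - m"
proof (induction A arbitrary: m)
  case Nil then show ?case by simp
next
  case (Cons a A)
  show ?case
  proof (cases m)
    case 0
    then show ?thesis using Cons.prems by (auto simp: filter_id_conv)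
  next
    case (Suc m')
    have "a < A!m'" using Cons.prems Suc by auto
    then have "\<not> A!m' < a" by simp
    then have "filter (\<lambda>l. (a#A)!m < l) (a#A) = filter (\<lambda>l. A!m' < l) A" using Suc by simp
    moreover have "length (filter (\<lambda>l. A!m' < l) A) = length A - 1 - m'"
      using Cons.IH Cons.prems Suc by simp
    ultimately show ?thesis using Suc by simp
  qed
qed

definition rbc :: "letter list \<Rightarrow> nat \<Rightarrow> nat \<Rightarrow> bool" where
  "rbc q i j \<longleftrightarrow> 1 \<le> j \<and> j \<le> length q \<and> q!(j-1) = q!(i-1) \<and>
     count_list (take (i-1) q) (q!(i-1)) = count_list (drop j q) (q!(i-1))"

lemma rbc_rb: assumes "1 \<le> i" "i \<le> length q" shows "rbc q i (rb q i)"
proof -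
  define x where "x = q!(i-1)"
  define A where "A = positions q x"
  have sA: "sorted_wrt (<) A" unfolding A_def by (rule positions_sorted)
  have "i \<in> set A" unfolding A_def set_positions x_def using assms by auto
  then obtain m where m: "m < length A" "A!m = i" by (meson in_set_conv_nth)
  have c: "length (filter (\<lambda>k. k < i) A) = m" using sorted_filter_less[OF sA m(1)] m(2) by simp
  have r: "rb q i = A ! (length A - 1 - m)"
    using assms m(1) c unfolding rb_def A_def x_def by (simp add: Let_def rev_nth)
  define j where "j = A ! (length A - 1 - m)"
  have jA: "j \<in> set A" unfolding j_def using m(1) by simp
  then have j: "1 \<le> j" "j \<le> length q" "q!(j-1) = x" unfolding A_def set_positions by auto
  have "count_list (take (i-1) q) x = m"
    using cnt_take[of "i-1" q x] assms c by (simp add: A_def)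
  moreover have "count_list (drop j q) x = m"
  proof -
    have "count_list (drop j q) x = length (filter (\<lambda>l. j < l) A)" using cnt_drop[OF j(2)] A_def by simp
    also have "\<dots> = length A - 1 - (length A - 1 - m)"
      unfolding j_def using sorted_filter_greater[OF sA, of "length A - 1 - m"] m(1) by simp
    also have "\<dots> = m" using m(1) by simp
    finally show ?thesis .
  qed
  ultimately show ?thesis using j r unfolding rbc_def j_def x_def by simp
qed

lemma count_split: assumes "1 \<le> i" "i \<le> length q"
  shows "count_list (take (i-1) q) y + (if q!(i-1) = y then 1 else 0) + count_list (drop i q) y = count_list q y"
proof -
  have "q = take (i-1) q @ q!(i-1) # drop (Suc (i-1)) q" using assms id_take_nth_drop[of "i-1" q] by simp
  also have "Suc (i-1) = i" using assms by simp
  finally have "count_list q y = count_list (take (i-1) q) y + count_list (q!(i-1) # drop i q) y"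
    by (metis count_list_append)
  then show ?thesis by simp
qed

lemma rbc_unique: assumes "rbc q i j" "rbc q i j'" shows "j = j'"
proof (rule ccontr)
  assume ne: "j \<noteq> j'"
  define x where "x = q!(i-1)"
  have key: "count_list (drop a q) x > count_list (drop b q) x" if "a < b" "rbc q i a" "rbc q i b" for a b
  proof -
    have b: "1 \<le> b" "b \<le> length q" "q!(b-1) = x" using that unfolding rbc_def x_def by auto
    have e: "take b q @ drop b q = q" by simp
    have d: "drop a (take b q @ drop b q) = drop a (take b q) @ drop (a - length (take b q)) (drop b q)"
      by (rule drop_append)
    have "a - length (take b q) = 0" using that(1) b(2) by simp
    then have "drop a q = drop a (take b q) @ drop b q" using d e by (metis drop_0)
    moreover have "x \<in> set (drop a (take b q))"
    proof -
      have "drop a (take b q) ! (b - 1 - a) = q ! (b-1)" using that(1) b by auto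
      moreover have "b - 1 - a < length (drop a (take b q))" using that(1) b by auto
      ultimately show ?thesis using b(3) by (metis nth_mem)
    qed
    ultimately show ?thesis by (simp add: count_list_0_iff[symmetric])
         (metis count_list_0_iff gr0I)
  qed
  show False
  proof (cases "j < j'")
    case True
    then show ?thesis using key[OF True assms] assms unfolding rbc_def x_def by simp
  next
    case False
    then have jj: "j' < j" using ne by simp
    show ?thesis using key[OF jj assms(2) assms(1)] assms unfolding rbc_def x_def by simp
  qed
qed

lemma rb_eq: "1 \<le> i \<Longrightarrow> i \<le> length q \<Longrightarrow> rbc q i j \<Longrightarrow> rb q i = j"
  using rbc_rb rbc_unique by blast

lemma rb_out: "\<not> (1 \<le> i \<and> i \<le> length q) \<Longrightarrow> rb q i = i"
  unfolding rb_def by auto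

lemma rb_range: "1 \<le> i \<Longrightarrow> i \<le> length q \<Longrightarrow> 1 \<le> rb q i \<and> rb q i \<le> length q"
  using rbc_rb unfolding rbc_def by blast

lemma rb_letter: "1 \<le> i \<Longrightarrow> i \<le> length q \<Longrightarrow> q ! (rb q i - 1) = q ! (i - 1)"
  using rbc_rb unfolding rbc_def by blast

lemma rb_invol: "rb q (rb q i) = i"
proof (cases "1 \<le> i \<and> i \<le> length q")
  case True
  define j where "j = rb q i"
  have c: "rbc q i j" unfolding j_def using True rbc_rb by blast
  then have j: "1 \<le> j" "j \<le> length q" "q!(j-1) = q!(i-1)" unfolding rbc_def by auto
  have "rbc q j i"
  proof -
    define x where "x = q!(i-1)"
    have s1: "count_list (take (i-1) q) x + 1 + count_list (drop i q) x = count_list q x"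
      using count_split[of i q x] True x_def by simp
    have s2: "count_list (take (j-1) q) x + 1 + count_list (drop j q) x = count_list q x"
      using count_split[of j q x] j x_def by simp
    have "count_list (take (i-1) q) x = count_list (drop j q) x" using c unfolding rbc_def x_def by simp
    then have "count_list (take (j-1) q) x = count_list (drop i q) x" using s1 s2 by simp
    then show ?thesis unfolding rbc_def using True j x_def by simp
  qed
  then show ?thesis using rb_eq j unfolding j_def by blast
next
  case False
  then show ?thesis by (simp add: rb_out)
qed

lemma invol_permutes: assumes "\<And>i. f (f i) = i" "\<And>i. i \<notin> S \<Longrightarrow> f i = i" shows "f permutes S"
  unfolding permutes_def
proof (intro conjI allI impI)
  fix y show "\<exists>!x. f x = y"
    by (rule ex1I[of _ "f y"]) (use assms in metis)+
qed (use assms in auto)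

lemma rb_permutes: "rb q permutes {1..length q}"
  by (rule invol_permutes) (auto simp: rb_invol rb_out)


definition ba :: "nat \<Rightarrow> (nat \<Rightarrow> nat) \<Rightarrow> nat \<Rightarrow> nat" where
  "ba N \<pi> b = card {c. b < c \<and> c \<le> N \<and> \<pi> b < \<pi> c}"

definition nice :: "nat \<Rightarrow> (nat \<Rightarrow> nat) \<Rightarrow> bool" where
  "nice N \<pi> \<longleftrightarrow> (\<forall>a b. 1 \<le> a \<longrightarrow> a < b \<longrightarrow> b \<le> N \<longrightarrow> \<pi> a < \<pi> b \<longrightarrow> ba N \<pi> b \<le> 1)"

definition cls :: "nat \<Rightarrow> letter" where
  "cls c = (if c = 0 then Lh else if c = 1 then Lr else Lu)"

definition adj :: "nat \<Rightarrow> nat \<Rightarrow> nat" where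
  "adj k v = (if v + 1 < k then v + 1 else v + 2)"

definition una :: "nat \<Rightarrow> nat \<Rightarrow> nat" where
  "una k i = (if i < k then i - 1 else i - 2)"

definition ins2 :: "nat \<Rightarrow> nat \<Rightarrow> (nat \<Rightarrow> nat) \<Rightarrow> nat \<Rightarrow> nat" where
  "ins2 N k \<sigma> i = (if i = 1 then k else if i = k then 1
      else if 2 \<le> i \<and> i \<le> N then adj k (\<sigma> (una k i)) else i)"

definition ins1 :: "nat \<Rightarrow> (nat \<Rightarrow> nat) \<Rightarrow> nat \<Rightarrow> nat" where
  "ins1 N \<sigma> i = (if i = 1 then 1 else if 2 \<le> i \<and> i \<le> N then Suc (\<sigma> (i - 1)) else i)"

lemma adj_range: "2 \<le> k \<Longrightarrow> k \<le> N \<Longrightarrow> 1 \<le> v \<Longrightarrow> v \<le> N - 2 \<Longrightarrow> 2 \<le> adj k v \<and> adj k v \<le> N \<and> adj k v \<noteq> k"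
  unfolding adj_def by auto
lemma una_adj[simp]: "una k (adj k v) = v"
  unfolding adj_def una_def by auto
lemma adj_una: "2 \<le> i \<Longrightarrow> i \<noteq> k \<Longrightarrow> adj k (una k i) = i"
  unfolding adj_def una_def by auto
lemma una_range: "2 \<le> i \<Longrightarrow> i \<le> N \<Longrightarrow> i \<noteq> k \<Longrightarrow> 2 \<le> k \<Longrightarrow> k \<le> N \<Longrightarrow> 1 \<le> una k i \<and> una k i \<le> N - 2"
  unfolding una_def by auto
lemma adj_mono[simp]: "adj k v < adj k w \<longleftrightarrow> v < w"
  unfolding adj_def by auto
lemma adj_inj[simp]: "adj k v = adj k w \<longleftrightarrow> v = w"
  unfolding adj_def by auto
lemma adj_gt: "2 \<le> k \<Longrightarrow> k < adj k w \<longleftrightarrow> k \<le> w + 1"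
  unfolding adj_def by auto
lemma adj_ge2: "1 \<le> v \<Longrightarrow> 2 \<le> adj k v"
  unfolding adj_def by auto

lemma ins2_1[simp]: "ins2 N k \<sigma> 1 = k" unfolding ins2_def by simp
lemma ins2_1'[simp]: "ins2 N k \<sigma> (Suc 0) = k" unfolding ins2_def by simp
lemma ins2_pos: "2 \<le> k \<Longrightarrow> 1 \<le> a \<Longrightarrow> ins2 N k \<sigma> a \<noteq> 0" unfolding ins2_def adj_def by auto
lemma adj_pos[simp]: "adj k w \<noteq> 0" unfolding adj_def by simp
lemma ins2_k[simp]: "2 \<le> k \<Longrightarrow> ins2 N k \<sigma> k = 1" unfolding ins2_def by simp
lemma ins2_adj: "2 \<le> k \<Longrightarrow> k \<le> N \<Longrightarrow> 1 \<le> v \<Longrightarrow> v \<le> N - 2 \<Longrightarrow> ins2 N k \<sigma> (adj k v) = adj k (\<sigma> v)"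
  using adj_range[of k N v] unfolding ins2_def by auto

lemma card_pre_perm:
  assumes "\<sigma> permutes Dm" "T \<subseteq> Dm" "finite Dm"
  shows "card {v \<in> Dm. \<sigma> v \<in> T} = card T"
proof -
  have inj: "inj_on \<sigma> {v \<in> Dm. \<sigma> v \<in> T}" using assms(1) permutes_inj inj_on_subset by blast
  have "\<sigma> ` {v \<in> Dm. \<sigma> v \<in> T} = T"
  proof
    show "\<sigma> ` {v \<in> Dm. \<sigma> v \<in> T} \<subseteq> T" by auto
    show "T \<subseteq> \<sigma> ` {v \<in> Dm. \<sigma> v \<in> T}"
    proof
      fix t assume t: "t \<in> T"
      obtain v where "\<sigma> v = t" using assms(1) permutes_surj by (metis surj_def)
      moreover have "v \<in> Dm" using assms t calculation by (metis in_mono permutes_not_in)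
      ultimately show "t \<in> \<sigma> ` {v \<in> Dm. \<sigma> v \<in> T}" using t by blast
    qed
  qed
  then show ?thesis using card_image[OF inj] by simp
qed

lemma perm_range: "\<sigma> permutes {1..M} \<Longrightarrow> 1 \<le> v \<Longrightarrow> v \<le> M \<Longrightarrow> 1 \<le> \<sigma> v \<and> \<sigma> v \<le> M"
  using permutes_in_image[of \<sigma> "{1..M}" v] by auto

lemma ba_ins2_adj:
  assumes s: "\<sigma> permutes {1..N-2}" and k: "2 \<le> k" "k \<le> N" and v: "1 \<le> v" "v \<le> N - 2"
  shows "ba N (ins2 N k \<sigma>) (adj k v) = ba (N-2) \<sigma> v"
proof -
  let ?\<pi> = "ins2 N k \<sigma>"
  have e: "{c. adj k v < c \<and> c \<le> N \<and> ?\<pi> (adj k v) < ?\<pi> c} = adj k ` {c. v < c \<and> c \<le> N-2 \<and> \<sigma> v < \<sigma> c}"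
  proof (intro set_eqI iffI)
    fix c assume c: "c \<in> {c. adj k v < c \<and> c \<le> N \<and> ?\<pi> (adj k v) < ?\<pi> c}"
    have pv: "?\<pi> (adj k v) = adj k (\<sigma> v)" using ins2_adj k v by blast
    have "2 \<le> c" using c adj_ge2[OF v(1), of k] by auto
    moreover have "c \<noteq> k"
    proof
      assume "c = k" then have "?\<pi> c = 1" using k by simp
      then show False using c pv by auto
    qed
    ultimately have cu: "c = adj k (una k c)" "1 \<le> una k c" "una k c \<le> N - 2"
      using adj_una una_range[of c N k] c k by auto
    have "?\<pi> c = adj k (\<sigma> (una k c))" using ins2_adj[OF k cu(2,3)] cu(1) by metis
    then have "v < una k c \<and> una k c \<le> N - 2 \<and> \<sigma> v < \<sigma> (una k c)"
      using c pv cu by (metis (mono_tags, lifting) adj_mono mem_Collect_eq)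
    then show "c \<in> adj k ` {c. v < c \<and> c \<le> N-2 \<and> \<sigma> v < \<sigma> c}" using cu(1) by blast
  next
    fix c assume "c \<in> adj k ` {c. v < c \<and> c \<le> N-2 \<and> \<sigma> v < \<sigma> c}"
    then obtain w where w: "c = adj k w" "v < w" "w \<le> N-2" "\<sigma> v < \<sigma> w" by auto
    have "?\<pi> (adj k v) = adj k (\<sigma> v)" "?\<pi> (adj k w) = adj k (\<sigma> w)"
      using ins2_adj k v w by auto
    then show "c \<in> {c. adj k v < c \<and> c \<le> N \<and> ?\<pi> (adj k v) < ?\<pi> c}"
      using w adj_range[OF k, of w] v by auto
  qed
  have "inj_on (adj k) X" for X by (auto intro: inj_onI)
  then show ?thesis unfolding ba_def e by (simp add: card_image)
qed

lemma ba_ins2_1: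
  assumes s: "\<sigma> permutes {1..N-2}" and k: "2 \<le> k" "k \<le> N"
  shows "ba N (ins2 N k \<sigma>) 1 = N - k"
proof -
  let ?\<pi> = "ins2 N k \<sigma>"
  have e: "{c. 1 < c \<and> c \<le> N \<and> ?\<pi> 1 < ?\<pi> c} = adj k ` {v \<in> {1..N-2}. \<sigma> v \<in> {k-1..N-2}}"
  proof (intro set_eqI iffI)
    fix c assume c: "c \<in> {c. 1 < c \<and> c \<le> N \<and> ?\<pi> 1 < ?\<pi> c}"
    have "c \<noteq> k" using c k by auto
    then have cu: "c = adj k (una k c)" "1 \<le> una k c" "una k c \<le> N - 2"
      using adj_una una_range[of c N k] c k by auto
    have "?\<pi> c = adj k (\<sigma> (una k c))" using ins2_adj[OF k cu(2,3)] cu(1) by metis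
    then have "k \<le> \<sigma> (una k c) + 1" using c adj_gt[OF k(1)] by simp
    moreover have "\<sigma> (una k c) \<le> N - 2" using perm_range[OF s cu(2,3)] by simp
    ultimately show "c \<in> adj k ` {v \<in> {1..N-2}. \<sigma> v \<in> {k-1..N-2}}" using cu by force
  next
    fix c assume "c \<in> adj k ` {v \<in> {1..N-2}. \<sigma> v \<in> {k-1..N-2}}"
    then obtain w where w: "c = adj k w" "1 \<le> w" "w \<le> N-2" "k - 1 \<le> \<sigma> w" by auto
    have "?\<pi> (adj k w) = adj k (\<sigma> w)" using ins2_adj k w by auto
    then show "c \<in> {c. 1 < c \<and> c \<le> N \<and> ?\<pi> 1 < ?\<pi> c}"
      using w adj_range[OF k, of w] adj_gt[OF k(1), of "\<sigma> w"] by auto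
  qed
  have "inj_on (adj k) X" for X by (auto intro: inj_onI)
  then have "ba N ?\<pi> 1 = card {v \<in> {1..N-2}. \<sigma> v \<in> {k-1..N-2}}" unfolding ba_def e by (simp add: card_image)
  also have "\<dots> = card {k-1..N-2}" by (rule card_pre_perm[OF s]) (use k in auto)
  also have "\<dots> = N - k" using k by simp
  finally show ?thesis .
qed

lemma ba_ins2_k:
  assumes s: "\<sigma> permutes {1..N-2}" and k: "2 \<le> k" "k \<le> N"
  shows "ba N (ins2 N k \<sigma>) k = N - k"
proof -
  let ?\<pi> = "ins2 N k \<sigma>"
  have e: "{c. k < c \<and> c \<le> N \<and> ?\<pi> k < ?\<pi> c} = {k<..N}"
  proof (intro set_eqI iffI)
    fix c assume c: "c \<in> {k<..N}"
    then have cu: "c = adj k (una k c)" "1 \<le> una k c" "una k c \<le> N - 2"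
      using adj_una una_range[of c N k] k by auto
    have "?\<pi> c = adj k (\<sigma> (una k c))" using ins2_adj[OF k cu(2,3)] cu(1) by metis
    moreover have "1 \<le> \<sigma> (una k c)" using perm_range[OF s cu(2,3)] by simp
    ultimately show "c \<in> {c. k < c \<and> c \<le> N \<and> ?\<pi> k < ?\<pi> c}"
      using c k adj_ge2[of "\<sigma> (una k c)" k] by auto
  qed auto
  show ?thesis unfolding ba_def e by simp
qed

lemma ins1_1[simp]: "ins1 N \<sigma> 1 = 1" unfolding ins1_def by simp
lemma ins1_1'[simp]: "ins1 N \<sigma> (Suc 0) = Suc 0" unfolding ins1_def by simp
lemma ins1_Suc: "1 \<le> v \<Longrightarrow> v \<le> N - 1 \<Longrightarrow> ins1 N \<sigma> (Suc v) = Suc (\<sigma> v)" unfolding ins1_def by auto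

lemma ba_ins1_Suc:
  assumes s: "\<sigma> permutes {1..N-1}" and v: "1 \<le> v" "v \<le> N - 1"
  shows "ba N (ins1 N \<sigma>) (Suc v) = ba (N-1) \<sigma> v"
proof -
  let ?\<pi> = "ins1 N \<sigma>"
  have e: "{c. Suc v < c \<and> c \<le> N \<and> ?\<pi> (Suc v) < ?\<pi> c} = Suc ` {c. v < c \<and> c \<le> N-1 \<and> \<sigma> v < \<sigma> c}"
  proof (intro set_eqI iffI)
    fix c assume c: "c \<in> {c. Suc v < c \<and> c \<le> N \<and> ?\<pi> (Suc v) < ?\<pi> c}"
    define w where "w = c - 1"
    have w: "c = Suc w" "1 \<le> w" "w \<le> N - 1" using c v unfolding w_def by auto
    then show "c \<in> Suc ` {c. v < c \<and> c \<le> N-1 \<and> \<sigma> v < \<sigma> c}" using c ins1_Suc v by auto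
  next
    fix c assume "c \<in> Suc ` {c. v < c \<and> c \<le> N-1 \<and> \<sigma> v < \<sigma> c}"
    then show "c \<in> {c. Suc v < c \<and> c \<le> N \<and> ?\<pi> (Suc v) < ?\<pi> c}" using ins1_Suc v by auto
  qed
  show ?thesis unfolding ba_def e by (simp add: card_image)
qed

lemma ba_ins1_1:
  assumes s: "\<sigma> permutes {1..N-1}"
  shows "ba N (ins1 N \<sigma>) 1 = N - 1"
proof -
  let ?\<pi> = "ins1 N \<sigma>"
  have e: "{c. 1 < c \<and> c \<le> N \<and> ?\<pi> 1 < ?\<pi> c} = {1<..N}"
  proof (intro set_eqI iffI)
    fix c assume c: "c \<in> {1<..N}"
    define w where "w = c - 1"
    have w: "c = Suc w" "1 \<le> w" "w \<le> N - 1" using c unfolding w_def by auto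
    then show "c \<in> {c. 1 < c \<and> c \<le> N \<and> ?\<pi> 1 < ?\<pi> c}" using c ins1_Suc[OF w(2,3)] perm_range[OF s w(2,3)] by auto
  qed auto
  show ?thesis unfolding ba_def e by simp
qed

lemma nice_ins2:
  assumes s: "\<sigma> permutes {1..N-2}" and k: "2 \<le> k" "k \<le> N" and n: "nice (N-2) \<sigma>"
    and h1: "\<And>b. k < b \<Longrightarrow> b \<le> N \<Longrightarrow> ba N (ins2 N k \<sigma>) b \<le> 1"
    and h2: "\<And>b. 1 \<le> b \<Longrightarrow> b \<le> N \<Longrightarrow> k < ins2 N k \<sigma> b \<Longrightarrow> ba N (ins2 N k \<sigma>) b \<le> 1"
  shows "nice N (ins2 N k \<sigma>)"
  unfolding nice_def
proof (intro allI impI)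
  fix a b assume ab: "1 \<le> a" "a < b" "b \<le> N" "ins2 N k \<sigma> a < ins2 N k \<sigma> b"
  let ?\<pi> = "ins2 N k \<sigma>"
  show "ba N ?\<pi> b \<le> 1"
  proof (cases "a = 1")
    case True then show ?thesis using ab h2 by auto
  next
    case a1: False
    show ?thesis
    proof (cases "a = k")
      case True then show ?thesis using ab h1 by auto
    next
      case ak: False
      have bk: "b \<noteq> k"
      proof
        assume "b = k" then have "ins2 N k \<sigma> b = 1" using k by simp
        then show False using ab ins2_pos[OF k(1) ab(1), of N \<sigma>] by simp
      qed
      have au: "a = adj k (una k a)" "1 \<le> una k a" "una k a \<le> N - 2"
        using adj_una una_range[of a N k] ab a1 ak k by auto
      have bu: "b = adj k (una k b)" "1 \<le> una k b" "una k b \<le> N - 2"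
        using adj_una una_range[of b N k] ab bk k by auto
      have "?\<pi> a = adj k (\<sigma> (una k a))" "?\<pi> b = adj k (\<sigma> (una k b))"
        using ins2_adj[OF k au(2,3)] ins2_adj[OF k bu(2,3)] au(1) bu(1) by metis+
      then have "\<sigma> (una k a) < \<sigma> (una k b)" "una k a < una k b" using ab au(1) bu(1) by (metis adj_mono)+
      then have "ba (N-2) \<sigma> (una k b) \<le> 1" using n au bu unfolding nice_def by blast
      then show ?thesis using ba_ins2_adj[OF s k bu(2,3)] bu(1) by metis
    qed
  qed
qed

lemma nice_ins1:
  assumes s: "\<sigma> permutes {1..N-1}" and n: "nice (N-1) \<sigma>"
    and h1: "\<And>b. 2 \<le> b \<Longrightarrow> b \<le> N \<Longrightarrow> ba N (ins1 N \<sigma>) b \<le> 1"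
  shows "nice N (ins1 N \<sigma>)"
  unfolding nice_def
proof (intro allI impI)
  fix a b assume ab: "1 \<le> a" "a < b" "b \<le> N" "ins1 N \<sigma> a < ins1 N \<sigma> b"
  show "ba N (ins1 N \<sigma>) b \<le> 1" using h1 ab by simp
qed


lemma all4: "(\<forall>x::nat. x < 4 \<longrightarrow> P x) \<longleftrightarrow> P 0 \<and> P 1 \<and> P 2 \<and> P 3"
  by (auto simp: eval_nat_numeral less_Suc_eq)

lemma strict_mono4: fixes f :: "nat \<Rightarrow> nat" assumes "f 0 < f 1" "f 1 < f 2" "f 2 < f 3" shows "strict_mono_on {..<4} f"
  unfolding strict_mono_on_def
proof (intro allI impI)
  fix r s :: nat assume "r \<in> {..<4} \<and> s \<in> {..<4} \<and> r < s"
  then have "r = 0 \<and> s = 1 \<or> r = 0 \<and> s = 2 \<or> r = 0 \<and> s = 3 \<or> r = 1 \<and> s = 2 \<or> r = 1 \<and> s = 3 \<or> r = 2 \<and> s = 3"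
    by (auto simp: eval_nat_numeral less_Suc_eq)
  then show "f r < f s" using assms by auto
qed

lemma card_two: assumes "2 \<le> card S" obtains c1 c2 where "c1 \<in> S" "c2 \<in> S" "c1 < (c2::nat)"
proof -
  have fin: "finite S"
  proof (rule ccontr)
    assume "infinite S" then have "card S = 0" by simp
    then show False using assms by simp
  qed
  have "S \<noteq> {}" using assms by auto
  then obtain x where x: "x \<in> S" by blast
  have "card (S - {x}) \<ge> 1" using assms x fin by (simp add: card_Diff_singleton)
  then have "S - {x} \<noteq> {}"
  proof (intro notI)
    assume "S - {x} = {}" with \<open>card (S - {x}) \<ge> 1\<close> show False by simp
  qed
  then obtain y where y: "y \<in> S" "y \<noteq> x" by blast
  show ?thesis
  proof (cases "x < y")
    case True then show ?thesis using that x y by blast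
  next
    case False then show ?thesis using that x y by (metis linorder_neqE_nat)
  qed
qed

lemma avoid_iff:
  assumes p: "\<pi> permutes {1..N}"
  shows "(avoids N \<pi> [1,2,3,4] \<and> avoids N \<pi> [1,2,4,3]) \<longleftrightarrow> nice N \<pi>"
proof
  assume av: "avoids N \<pi> [1,2,3,4] \<and> avoids N \<pi> [1,2,4,3]"
  show "nice N \<pi>" unfolding nice_def
  proof (intro allI impI, rule ccontr)
    fix a b assume ab: "1 \<le> a" "a < b" "b \<le> N" "\<pi> a < \<pi> b" "\<not> ba N \<pi> b \<le> 1"
    then have "2 \<le> card {c. b < c \<and> c \<le> N \<and> \<pi> b < \<pi> c}" unfolding ba_def by simp
    then obtain c1 c2 where c: "b < c1" "c1 \<le> N" "\<pi> b < \<pi> c1" "b < c2" "c2 \<le> N" "\<pi> b < \<pi> c2" "c1 < c2"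
      by (rule card_two) auto
    have "\<pi> c1 \<noteq> \<pi> c2" using c p permutes_inj by (metis injD less_irrefl)
    define f where "f = (\<lambda>i::nat. [a, b, c1, c2] ! i)"
    have f: "f 0 = a" "f 1 = b" "f (Suc 0) = b" "f 2 = c1" "f 3 = c2" unfolding f_def by (simp_all add: eval_nat_numeral)
    have sm: "strict_mono_on {..<4} f"
      by (rule strict_mono4) (use ab c in \<open>simp_all add: f\<close>)
    have rng: "\<forall>x < 4. f x \<in> {1..N}" by (simp only: all4) (use ab c in \<open>simp add: f\<close>)
    have l4: "length [1,2,3,4::nat] = 4" "length [1,2,4,3::nat] = 4" by simp_all
    show False
    proof (cases "\<pi> c1 < \<pi> c2")
      case True
      have "contains_pattern N \<pi> [1,2,3,4]" unfolding contains_pattern_def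
        apply (rule exI[of _ f])
        unfolding l4 using sm rng ab c True by (simp only: all4) (simp add: f)
      then show False using av unfolding avoids_def by simp
    next
      case False
      then have "\<pi> c2 < \<pi> c1" using \<open>\<pi> c1 \<noteq> \<pi> c2\<close> by simp
      have "contains_pattern N \<pi> [1,2,4,3]" unfolding contains_pattern_def
        apply (rule exI[of _ f])
        unfolding l4 using sm rng ab c \<open>\<pi> c2 < \<pi> c1\<close> by (simp only: all4) (simp add: f)
      then show False using av unfolding avoids_def by simp
    qed
  qed
next
  assume n: "nice N \<pi>"
  have main: False if cp: "contains_pattern N \<pi> \<sigma>" and sg: "\<sigma> = [1,2,3,4] \<or> \<sigma> = [1,2,4,3]" for \<sigma>
  proof -
    obtain f where f: "strict_mono_on {..<length \<sigma>} f" "\<forall>a < length \<sigma>. f a \<in> {1..N}"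
        "\<forall>a < length \<sigma>. \<forall>b < length \<sigma>. \<pi> (f a) < \<pi> (f b) \<longleftrightarrow> \<sigma> ! a < \<sigma> ! b"
      using cp unfolding contains_pattern_def by blast
    have l: "length \<sigma> = 4" using sg by auto
    have sm: "\<And>r s. r < 4 \<Longrightarrow> s < 4 \<Longrightarrow> r < s \<Longrightarrow> f r < f s"
      using f(1) l unfolding strict_mono_on_def by auto
    have o: "f 0 < f 1" "f 1 < f 2" "f 2 < f 3" using sm by simp_all
    have r: "1 \<le> f 0" "f 3 \<le> N" using f(2) l by auto
    have ff: "\<And>a b. a < 4 \<Longrightarrow> b < 4 \<Longrightarrow> \<pi> (f a) < \<pi> (f b) \<longleftrightarrow> \<sigma> ! a < \<sigma> ! b"
      using f(3) l by auto
    have s01: "\<sigma>!0 < \<sigma>!1" "\<sigma>!1 < \<sigma>!2" "\<sigma>!1 < \<sigma>!3" using sg by (auto simp: eval_nat_numeral)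
    have v: "\<pi> (f 0) < \<pi> (f 1)" "\<pi> (f 1) < \<pi> (f 2)" "\<pi> (f 1) < \<pi> (f 3)"
      using ff[of 0 1] ff[of 1 2] ff[of 1 3] s01 by simp_all
    have "{f 2, f 3} \<subseteq> {c. f 1 < c \<and> c \<le> N \<and> \<pi> (f 1) < \<pi> c}" using o r v by auto
    then have "card {f 2, f 3} \<le> ba N \<pi> (f 1)" unfolding ba_def by (rule card_mono[rotated]) auto
    then have "2 \<le> ba N \<pi> (f 1)" using o by simp
    moreover have "ba N \<pi> (f 1) \<le> 1"
    proof -
      have "1 \<le> f 0" "f 0 < f 1" "f 1 \<le> N" using o r by simp_all
      then show ?thesis using n v(1) unfolding nice_def by blast
    qed
    ultimately show False by simp
  qed
  show "avoids N \<pi> [1,2,3,4] \<and> avoids N \<pi> [1,2,4,3]" unfolding avoids_def using main by blast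
qed


definition std2 :: "nat \<Rightarrow> nat \<Rightarrow> (nat \<Rightarrow> nat) \<Rightarrow> nat \<Rightarrow> nat" where
  "std2 N k \<pi> i = (if 1 \<le> i \<and> i \<le> N - 2 then una k (\<pi> (adj k i)) else i)"

definition std1 :: "nat \<Rightarrow> (nat \<Rightarrow> nat) \<Rightarrow> nat \<Rightarrow> nat" where
  "std1 N \<pi> i = (if 1 \<le> i \<and> i \<le> N - 1 then \<pi> (Suc i) - 1 else i)"

lemma dec2:
  assumes p: "\<pi> permutes {1..N}" and inv: "\<And>i. \<pi> (\<pi> i) = i" and k: "\<pi> 1 = k" "2 \<le> k"
  shows "std2 N k \<pi> permutes {1..N-2}" "\<And>i. std2 N k \<pi> (std2 N k \<pi> i) = i"
    "\<pi> = ins2 N k (std2 N k \<pi>)"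
proof -
  have kN: "k \<le> N"
  proof (cases "1 \<le> N")
    case True then show ?thesis using perm_range[OF p, of 1] k by simp
  next
    case False
    then have "(1::nat) \<notin> {1..N}" by simp
    then have "\<pi> 1 = 1" using p by (simp add: permutes_not_in)
    then show ?thesis using k by simp
  qed
  have pk: "\<pi> k = 1" using inv k by metis
  have good: "2 \<le> \<pi> j \<and> \<pi> j \<le> N \<and> \<pi> j \<noteq> k" if "2 \<le> j" "j \<le> N" "j \<noteq> k" for j
  proof -
    have "1 \<le> \<pi> j" "\<pi> j \<le> N" using perm_range[OF p, of j] that by auto
    moreover have "\<pi> j \<noteq> 1"
    proof
      assume "\<pi> j = 1" then have "j = \<pi> 1" using inv by metis
      then show False using that k by simp
    qed
    moreover have "\<pi> j \<noteq> k"
    proof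
      assume "\<pi> j = k" then have "j = \<pi> k" using inv by metis
      then show False using that pk by simp
    qed
    ultimately show ?thesis by auto
  qed
  have sr: "1 \<le> std2 N k \<pi> i \<and> std2 N k \<pi> i \<le> N - 2" if "1 \<le> i" "i \<le> N - 2" for i
  proof -
    have "2 \<le> adj k i \<and> adj k i \<le> N \<and> adj k i \<noteq> k" using adj_range[OF k(2) kN that] .
    then have "2 \<le> \<pi> (adj k i) \<and> \<pi> (adj k i) \<le> N \<and> \<pi> (adj k i) \<noteq> k" using good by blast
    then show ?thesis using una_range[of "\<pi> (adj k i)" N k] k kN that unfolding std2_def by auto
  qed
  show inv2: "\<And>i. std2 N k \<pi> (std2 N k \<pi> i) = i"
  proof -
    fix i show "std2 N k \<pi> (std2 N k \<pi> i) = i"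
    proof (cases "1 \<le> i \<and> i \<le> N - 2")
      case True
      have a: "2 \<le> adj k i \<and> adj k i \<le> N \<and> adj k i \<noteq> k" using adj_range[OF k(2) kN] True by blast
      then have g: "2 \<le> \<pi> (adj k i) \<and> \<pi> (adj k i) \<le> N \<and> \<pi> (adj k i) \<noteq> k" using good by blast
      have "std2 N k \<pi> (std2 N k \<pi> i) = una k (\<pi> (adj k (una k (\<pi> (adj k i)))))"
        using sr[OF conjunct1[OF True] conjunct2[OF True]] True unfolding std2_def by auto
      also have "\<dots> = una k (\<pi> (\<pi> (adj k i)))" using adj_una g by simp
      also have "\<dots> = i" using inv by simp
      finally show ?thesis .
    next
      case False
      then have e: "std2 N k \<pi> i = i" unfolding std2_def by auto
      show ?thesis using e by simp
    qed
  qed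
  show "std2 N k \<pi> permutes {1..N-2}"
  proof (rule invol_permutes)
    show "\<And>i. std2 N k \<pi> (std2 N k \<pi> i) = i" by (rule inv2)
    show "\<And>i. i \<notin> {1..N-2} \<Longrightarrow> std2 N k \<pi> i = i" unfolding std2_def by auto
  qed
  show "\<pi> = ins2 N k (std2 N k \<pi>)"
  proof
    fix i
    show "\<pi> i = ins2 N k (std2 N k \<pi>) i"
    proof (cases "i = 1")
      case True then show ?thesis using k by simp
    next
      case i1: False
      show ?thesis
      proof (cases "i = k")
        case True then show ?thesis using pk k by simp
      next
        case ik: False
        show ?thesis
        proof (cases "2 \<le> i \<and> i \<le> N")
          case True
          have u: "1 \<le> una k i \<and> una k i \<le> N - 2" using una_range[of i N k] True ik k kN by auto
          have "ins2 N k (std2 N k \<pi>) i = adj k (una k (\<pi> (adj k (una k i))))"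
            using True i1 ik u unfolding ins2_def std2_def by auto
          also have "\<dots> = \<pi> i" using adj_una good True ik by simp
          finally show ?thesis by simp
        next
          case False
          then have "i \<notin> {1..N}" using i1 by auto
          then have "\<pi> i = i" using p by (simp add: permutes_not_in)
          moreover have "ins2 N k (std2 N k \<pi>) i = i" unfolding ins2_def using False i1 ik by auto
          ultimately show ?thesis by simp
        qed
      qed
    qed
  qed
qed

lemma dec1:
  assumes p: "\<pi> permutes {1..N}" and inv: "\<And>i. \<pi> (\<pi> i) = i" and k: "\<pi> 1 = 1"
  shows "std1 N \<pi> permutes {1..N-1}" "\<And>i. std1 N \<pi> (std1 N \<pi> i) = i"
    "\<pi> = ins1 N (std1 N \<pi>)"
proof -
  have good: "2 \<le> \<pi> j \<and> \<pi> j \<le> N" if "2 \<le> j" "j \<le> N" for j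
  proof -
    have "1 \<le> \<pi> j" "\<pi> j \<le> N" using perm_range[OF p, of j] that by auto
    moreover have "\<pi> j \<noteq> 1"
    proof
      assume "\<pi> j = 1" then have "j = \<pi> 1" using inv by metis
      then show False using that k by simp
    qed
    ultimately show ?thesis by auto
  qed
  show inv1: "\<And>i. std1 N \<pi> (std1 N \<pi> i) = i"
  proof -
    fix i show "std1 N \<pi> (std1 N \<pi> i) = i"
    proof (cases "1 \<le> i \<and> i \<le> N - 1")
      case True
      have g: "2 \<le> \<pi> (Suc i) \<and> \<pi> (Suc i) \<le> N" using good True by auto
      then have "std1 N \<pi> (std1 N \<pi> i) = \<pi> (Suc (\<pi> (Suc i) - 1)) - 1"
        using True unfolding std1_def by auto
      also have "\<dots> = i" using inv g by simp
      finally show ?thesis .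
    next
      case False
      then have e: "std1 N \<pi> i = i" unfolding std1_def by auto
      show ?thesis using e by simp
    qed
  qed
  show "std1 N \<pi> permutes {1..N-1}"
  proof (rule invol_permutes)
    show "\<And>i. std1 N \<pi> (std1 N \<pi> i) = i" by (rule inv1)
    show "\<And>i. i \<notin> {1..N-1} \<Longrightarrow> std1 N \<pi> i = i" unfolding std1_def by auto
  qed
  show "\<pi> = ins1 N (std1 N \<pi>)"
  proof
    fix i
    show "\<pi> i = ins1 N (std1 N \<pi>) i"
    proof (cases "i = 1")
      case True then show ?thesis using k by simp
    next
      case i1: False
      show ?thesis
      proof (cases "2 \<le> i \<and> i \<le> N")
        case True
        then have "ins1 N (std1 N \<pi>) i = Suc (\<pi> (Suc (i - 1)) - 1)" unfolding ins1_def std1_def by auto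
        also have "\<dots> = \<pi> i" using good[of i] True by simp
        finally show ?thesis by simp
      next
        case False
        then have "i \<notin> {1..N}" using i1 by auto
        then have "\<pi> i = i" using p by (simp add: permutes_not_in)
        moreover have "ins1 N (std1 N \<pi>) i = i" unfolding ins1_def using False i1 by auto
        ultimately show ?thesis by simp
      qed
    qed
  qed
qed

lemma nice_std2:
  assumes s: "\<sigma> permutes {1..N-2}" and k: "2 \<le> k" "k \<le> N" and n: "nice N (ins2 N k \<sigma>)"
  shows "nice (N-2) \<sigma>"
  unfolding nice_def
proof (intro allI impI)
  fix a b assume ab: "1 \<le> a" "a < b" "b \<le> N - 2" "\<sigma> a < \<sigma> b"
  have "ins2 N k \<sigma> (adj k a) < ins2 N k \<sigma> (adj k b)" using ins2_adj[OF k] ab by simp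
  moreover have "1 \<le> adj k a" "adj k a < adj k b" "adj k b \<le> N" using adj_range[OF k, of a] adj_range[OF k, of b] ab by auto
  ultimately have "ba N (ins2 N k \<sigma>) (adj k b) \<le> 1" using n unfolding nice_def by blast
  then show "ba (N-2) \<sigma> b \<le> 1" using ba_ins2_adj[OF s k, of b] ab by simp
qed

lemma nice_std1:
  assumes s: "\<sigma> permutes {1..N-1}" and n: "nice N (ins1 N \<sigma>)"
  shows "nice (N-1) \<sigma>"
  unfolding nice_def
proof (intro allI impI)
  fix a b assume ab: "1 \<le> a" "a < b" "b \<le> N - 1" "\<sigma> a < \<sigma> b"
  have "ins1 N \<sigma> (Suc a) < ins1 N \<sigma> (Suc b)" using ins1_Suc ab by simp
  moreover have "1 \<le> Suc a" "Suc a < Suc b" "Suc b \<le> N" using ab by auto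
  ultimately have "ba N (ins1 N \<sigma>) (Suc b) \<le> 1" using n unfolding nice_def by blast
  then show "ba (N-1) \<sigma> b \<le> 1" using ba_ins1_Suc[OF s, of b] ab by simp
qed


lemma q_nth: assumes "1 \<le> w" "w \<le> length A + length B"
  shows "(x # A @ x # B) ! (adj (length A + 2) w - 1) = (A @ B) ! (w - 1)"
proof -
  obtain w' where w: "w = Suc w'" using assms(1) by (cases w) auto
  show ?thesis
  proof (cases "w' < length A")
    case True
    then have "adj (length A + 2) w - 1 = Suc w'" unfolding adj_def w by simp
    then show ?thesis using True w by (simp add: nth_append)
  next
    case False
    then have "adj (length A + 2) w - 1 = Suc (Suc w')" unfolding adj_def w by simp
    moreover have "Suc w' - length A = Suc (w' - length A)" using False by simp
    ultimately show ?thesis using False w by (simp add: nth_append)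
  qed
qed

lemma q_take: assumes "1 \<le> v" "v \<le> length A + length B"
  shows "count_list (take (adj (length A + 2) v - 1) (x # A @ x # B)) y =
    count_list (take (v - 1) (A @ B)) y + (if y = x then 1 else 0) + (if y = x \<and> length A < v then 1 else 0)"
proof -
  obtain v' where v: "v = Suc v'" using assms(1) by (cases v) auto
  show ?thesis
  proof (cases "v' < length A")
    case True
    then have "adj (length A + 2) v - 1 = Suc v'" unfolding adj_def v by simp
    then show ?thesis using True v by (simp add: take_append)
  next
    case False
    then have "adj (length A + 2) v - 1 = Suc (Suc v')" unfolding adj_def v by simp
    moreover have "Suc v' - length A = Suc (v' - length A)" using False by simp
    ultimately show ?thesis using False v by (simp add: take_append)
  qed
qed

lemma q_drop: assumes "1 \<le> w" "w \<le> length A + length B"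
  shows "count_list (drop (adj (length A + 2) w) (x # A @ x # B)) y =
    count_list (drop w (A @ B)) y + (if y = x \<and> w \<le> length A then 1 else 0)"
proof (cases "w \<le> length A")
  case True
  then have "adj (length A + 2) w = Suc w" unfolding adj_def by simp
  then show ?thesis using True by (simp add: drop_append)
next
  case False
  then have "adj (length A + 2) w = Suc (Suc w)" unfolding adj_def by simp
  moreover have "Suc w - length A = Suc (w - length A)" using False by auto
  ultimately show ?thesis using False by (simp add: drop_append)
qed

lemma AB_in_B: assumes "length A < w" "w \<le> length A + length B" shows "(A @ B) ! (w - 1) \<in> set B"
proof -
  obtain t where t: "w = Suc (length A + t)" using assms(1) by (metis less_imp_Suc_add)
  have "(A @ B) ! (w - 1) = B ! t" unfolding t by (simp add: nth_append_length_plus)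
  moreover have "t < length B" using assms(2) t by simp
  ultimately show ?thesis by simp
qed


lemma G1: assumes xB: "x \<notin> set B"
  shows "rb (x # A @ x # B) = ins2 (length A + length B + 2) (length A + 2) (rb (A @ B))"
proof
  fix i
  let ?q = "x # A @ x # B" and ?Q = "A @ B" and ?k = "length A + 2" and ?N = "length A + length B + 2"
  have lq: "length ?q = ?N" by simp
  show "rb ?q i = ins2 ?N ?k (rb ?Q) i"
  proof (cases "1 \<le> i \<and> i \<le> ?N")
    case False
    then show ?thesis using rb_out[of i ?q] unfolding ins2_def by auto
  next
    case True
    show ?thesis
    proof (cases "i = 1")
      case i1: True
      have "rbc ?q 1 ?k" unfolding rbc_def using xB by (simp add: nth_append count_list_0_iff)
      then show ?thesis using rb_eq[of 1 ?q] i1 by simp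
    next
      case i1: False
      show ?thesis
      proof (cases "i = ?k")
        case ik: True
        have "rbc ?q ?k 1" unfolding rbc_def using xB by (simp add: nth_append count_list_0_iff)
        then show ?thesis using rb_eq[of ?k ?q] ik by simp
      next
        case ik: False
        define v where "v = una ?k i"
        have v: "1 \<le> v" "v \<le> length A + length B" "i = adj ?k v"
          using una_range[of i ?N ?k] adj_una[of i ?k] True i1 ik unfolding v_def by auto
        define w where "w = rb ?Q v"
        have c: "rbc ?Q v w" unfolding w_def using rbc_rb v by simp
        then have w: "1 \<le> w" "w \<le> length A + length B" "?Q ! (w-1) = ?Q ! (v-1)"
          "count_list (take (v-1) ?Q) (?Q!(v-1)) = count_list (drop w ?Q) (?Q!(v-1))"
          unfolding rbc_def by auto
        define y where "y = ?Q ! (v-1)"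
        have qi: "?q ! (i - 1) = y" using q_nth[OF v(1,2)] v(3) y_def by simp
        have qw: "?q ! (adj ?k w - 1) = y" using q_nth[OF w(1,2)] w(3) y_def by simp
        have vA: "y = x \<Longrightarrow> v \<le> length A" using AB_in_B[of A v B] v xB y_def by (metis not_le)
        have wA: "y = x \<Longrightarrow> w \<le> length A" using AB_in_B[of A w B] w xB y_def by (metis not_le)
        have "rbc ?q i (adj ?k w)"
          unfolding rbc_def
        proof (intro conjI)
          show "1 \<le> adj ?k w" unfolding adj_def by simp
          show "adj ?k w \<le> length ?q" using adj_range[of ?k ?N w] w by simp
          show "?q ! (adj ?k w - 1) = ?q ! (i - 1)" using qi qw by simp
          show "count_list (take (i - 1) ?q) (?q ! (i - 1)) = count_list (drop (adj ?k w) ?q) (?q ! (i - 1))"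
            unfolding qi using q_take[OF v(1,2), of x y] q_drop[OF w(1,2), of x y] v(3) w(4) vA wA y_def
            by auto
        qed
        then have "rb ?q i = adj ?k w" using rb_eq True by simp
        moreover have "ins2 ?N ?k (rb ?Q) i = adj ?k w" unfolding ins2_def w_def v_def using True i1 ik by simp
        ultimately show ?thesis by simp
      qed
    qed
  qed
qed

lemma G2: assumes xQ: "x \<notin> set Q"
  shows "rb (x # Q) = ins1 (length Q + 1) (rb Q)"
proof
  fix i
  let ?q = "x # Q" and ?N = "length Q + 1"
  show "rb ?q i = ins1 ?N (rb Q) i"
  proof (cases "1 \<le> i \<and> i \<le> ?N")
    case False
    then show ?thesis using rb_out[of i ?q] unfolding ins1_def by auto
  next
    case True
    show ?thesis
    proof (cases "i = 1")
      case i1: True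
      have "rbc ?q 1 1" unfolding rbc_def using xQ by simp
      then show ?thesis using rb_eq[of 1 ?q] i1 by simp
    next
      case i1: False
      define v where "v = i - 1"
      have v: "1 \<le> v" "v \<le> length Q" "i = Suc v" using True i1 unfolding v_def by auto
      define w where "w = rb Q v"
      have c: "rbc Q v w" unfolding w_def using rbc_rb v by simp
      then have w: "1 \<le> w" "w \<le> length Q" "Q ! (w-1) = Q ! (v-1)"
          "count_list (take (v-1) Q) (Q!(v-1)) = count_list (drop w Q) (Q!(v-1))"
        unfolding rbc_def by auto
      have "Q ! (v-1) \<in> set Q" using v by simp
      then have yx: "Q ! (v-1) \<noteq> x" using xQ by auto
      have t: "take (i-1) ?q = x # take (v-1) Q" using v by (cases v) auto
      have n1: "?q ! (Suc w - 1) = Q ! (w-1)" using w by (cases w) auto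
      have n2: "?q ! (i - 1) = Q ! (v-1)" using v by (cases v) auto
      have "rbc ?q i (Suc w)"
        unfolding rbc_def using v w yx t n1 n2 by simp
      then have "rb ?q i = Suc w" using rb_eq True by simp
      moreover have "ins1 ?N (rb Q) i = Suc w" unfolding ins1_def w_def v_def using True i1 by simp
      ultimately show ?thesis by simp
    qed
  qed
qed


definition cl :: "letter list \<Rightarrow> bool" where
  "cl q \<longleftrightarrow> (\<forall>i. 1 \<le> i \<longrightarrow> i \<le> length q \<longrightarrow> q!(i-1) = cls (ba (length q) (rb q) i))"

definition GW :: "letter list \<Rightarrow> bool" where
  "GW q \<longleftrightarrow> cl q \<and> nice (length q) (rb q)"

lemma cls_u: "cls c = Lu \<longleftrightarrow> 2 \<le> c" unfolding cls_def by auto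

lemma GEN2: assumes xB: "x \<notin> set B" and uB: "Lu \<notin> set B" and xc: "x = cls (length B)" and g: "GW (A @ B)"
  shows "GW (x # A @ x # B)"
proof -
  let ?q = "x # A @ x # B" and ?Q = "A @ B" and ?k = "length A + 2" and ?N = "length A + length B + 2"
  have e: "rb ?q = ins2 ?N ?k (rb ?Q)" by (rule G1[OF xB])
  have s: "rb ?Q permutes {1..?N - 2}" using rb_permutes[of ?Q] by simp
  have k: "2 \<le> ?k" "?k \<le> ?N" by auto
  have lq: "length ?q = ?N" by simp
  have clQ: "cl ?Q" "nice (?N - 2) (rb ?Q)" using g unfolding GW_def by auto
  have inB: "?q ! (b - 1) \<in> set B" if "?k < b" "b \<le> ?N" for b
  proof -
    define t where "t = b - length A - 3"
    have bt: "b = length A + 3 + t" using that unfolding t_def by simp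
    have "b - 1 = Suc (length A + Suc t)" using bt by simp
    then have "?q ! (b - 1) = (A @ x # B) ! (length A + Suc t)" by (simp del: append_Cons)
    also have "\<dots> = B ! t" by (simp only: nth_append_length_plus nth_Cons_Suc)
    finally show ?thesis using that bt by simp
  qed
  have cq: "cl ?q" unfolding cl_def lq
  proof (intro allI impI)
    fix i assume i: "1 \<le> i" "i \<le> ?N"
    show "?q ! (i-1) = cls (ba ?N (rb ?q) i)"
    proof (cases "i = 1")
      case True then show ?thesis using ba_ins2_1[OF s k] e xc by simp
    next
      case i1: False
      show ?thesis
      proof (cases "i = ?k")
        case True then show ?thesis using ba_ins2_k[OF s k] e xc by (simp add: nth_append)
      next
        case ik: False
        define v where "v = una ?k i"
        have v: "1 \<le> v" "v \<le> length A + length B" "i = adj ?k v"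
          using una_range[of i ?N ?k] adj_una[of i ?k] i i1 ik unfolding v_def by auto
        have "?q ! (i-1) = ?Q ! (v-1)" using q_nth[OF v(1,2)] v(3) by simp
        also have "\<dots> = cls (ba (length ?Q) (rb ?Q) v)" using clQ v unfolding cl_def by simp
        also have "\<dots> = cls (ba ?N (rb ?q) i)" using ba_ins2_adj[OF s k, of v] v e by simp
        finally show ?thesis .
      qed
    qed
  qed
  have clq: "\<And>b. 1 \<le> b \<Longrightarrow> b \<le> ?N \<Longrightarrow> ?q ! (b-1) = cls (ba ?N (rb ?q) b)"
    using cq unfolding cl_def lq by blast
  have h1: "ba ?N (rb ?q) b \<le> 1" if "?k < b" "b \<le> ?N" for b
  proof (rule ccontr)
    assume a: "\<not> ba ?N (rb ?q) b \<le> 1"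
    have "?q ! (b-1) = cls (ba ?N (rb ?q) b)" by (rule clq) (use that in auto)
    then have "?q ! (b-1) = Lu" using a by (simp add: cls_u)
    then show False using inB[OF that] uB by simp
  qed
  have h2: "ba ?N (rb ?q) b \<le> 1" if "1 \<le> b" "b \<le> ?N" "?k < rb ?q b" for b
  proof (rule ccontr)
    assume a: "\<not> ba ?N (rb ?q) b \<le> 1"
    have "?q ! (b-1) = cls (ba ?N (rb ?q) b)" by (rule clq) (use that in auto)
    then have "?q ! (b-1) = Lu" using a by (simp add: cls_u)
    then have "?q ! (rb ?q b - 1) = Lu" using rb_letter[of b ?q] that by simp
    moreover have "rb ?q b \<le> ?N" using rb_range[of b ?q] that by simp
    ultimately show False using inB[OF that(3)] uB by simp
  qed
  have h1': "\<And>b. ?k < b \<Longrightarrow> b \<le> ?N \<Longrightarrow> ba ?N (ins2 ?N ?k (rb ?Q)) b \<le> 1"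
    using h1 unfolding e by blast
  have h2': "\<And>b. 1 \<le> b \<Longrightarrow> b \<le> ?N \<Longrightarrow> ?k < ins2 ?N ?k (rb ?Q) b \<Longrightarrow> ba ?N (ins2 ?N ?k (rb ?Q)) b \<le> 1"
    using h2 unfolding e by blast
  have "nice ?N (ins2 ?N ?k (rb ?Q))"
    by (rule nice_ins2[OF s k clQ(2) h1' h2'])
  then have "nice ?N (rb ?q)" unfolding e .
  then show ?thesis using cq unfolding GW_def lq by simp
qed

lemma GEN1: assumes xQ: "x \<notin> set Q" and uQ: "Lu \<notin> set Q" and xc: "x = cls (length Q)" and g: "GW Q"
  shows "GW (x # Q)"
proof -
  let ?q = "x # Q" and ?N = "length Q + 1"
  have e: "rb ?q = ins1 ?N (rb Q)" by (rule G2[OF xQ])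
  have s: "rb Q permutes {1..?N - 1}" using rb_permutes[of Q] by simp
  have lq: "length ?q = ?N" by simp
  have clQ: "cl Q" "nice (?N - 1) (rb Q)" using g unfolding GW_def by auto
  have cq: "cl ?q" unfolding cl_def lq
  proof (intro allI impI)
    fix i assume i: "1 \<le> i" "i \<le> ?N"
    show "?q ! (i-1) = cls (ba ?N (rb ?q) i)"
    proof (cases "i = 1")
      case True then show ?thesis using ba_ins1_1[OF s] e xc by simp
    next
      case i1: False
      define v where "v = i - 1"
      have v: "1 \<le> v" "v \<le> length Q" "i = Suc v" using i i1 unfolding v_def by auto
      have "?q ! (i-1) = Q ! (v-1)" using v by simp
      also have "\<dots> = cls (ba (length Q) (rb Q) v)" using clQ v unfolding cl_def by simp
      also have "\<dots> = cls (ba ?N (rb ?q) i)" using ba_ins1_Suc[OF s, of v] v e by simp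
      finally show ?thesis .
    qed
  qed
  have h1: "ba ?N (rb ?q) b \<le> 1" if "2 \<le> b" "b \<le> ?N" for b
  proof (rule ccontr)
    assume a: "\<not> ba ?N (rb ?q) b \<le> 1"
    have "1 \<le> b" using that by simp
    then have "?q ! (b-1) = cls (ba ?N (rb ?q) b)" using cq that(2) unfolding cl_def lq by blast
    then have "?q ! (b-1) = Lu" using a by (simp add: cls_u)
    moreover have "?q ! (b-1) \<in> set Q"
    proof -
      have "?q ! (b-1) = Q ! (b - 2)" using that by (cases b) auto
      then show ?thesis using that by simp
    qed
    ultimately show False using uQ by simp
  qed
  have h1': "\<And>b. 2 \<le> b \<Longrightarrow> b \<le> ?N \<Longrightarrow> ba ?N (ins1 ?N (rb Q)) b \<le> 1"
    using h1 unfolding e by blast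
  have "nice ?N (ins1 ?N (rb Q))"
    by (rule nice_ins1[OF s clQ(2) h1'])
  then have "nice ?N (rb ?q)" unfolding e .
  then show ?thesis using cq unfolding GW_def lq by simp
qed

lemma GW_h: "GW [Lh]"
proof -
  have "rb [Lh] 1 = 1" using rb_range[of 1 "[Lh]"] by simp
  moreover have "ba 1 \<pi> 1 = 0" for \<pi> unfolding ba_def by simp
  ultimately show ?thesis unfolding GW_def cl_def nice_def by (auto simp: cls_def)
qed

lemma GW_nil: "GW []"
  unfolding GW_def cl_def nice_def by auto


datatype tok = TH | TR | TU | TD

fun Xw :: "tok list \<Rightarrow> letter list" where
  "Xw [] = []"
| "Xw (TH # xs) = Lh # Xw xs"
| "Xw (TR # xs) = Lr # Xw xs"
| "Xw (TU # xs) = Lu # Xw xs"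
| "Xw (TD # xs) = Xw xs"

fun Yw :: "tok list \<Rightarrow> letter list" where
  "Yw [] = []"
| "Yw (TH # xs) = Lh # Yw xs"
| "Yw (TR # xs) = Lr # Yw xs"
| "Yw (TU # xs) = Yw xs"
| "Yw (TD # xs) = Lu # Yw xs"

lemma Xw_append[simp]: "Xw (a @ b) = Xw a @ Xw b"
  by (induction a rule: Xw.induct) auto
lemma Yw_append[simp]: "Yw (a @ b) = Yw a @ Yw b"
  by (induction a rule: Yw.induct) auto

fun good :: "tok list \<Rightarrow> bool" where
  "good [] = True"
| "good [x] = True"
| "good (x # y # xs) = ((x \<noteq> TU \<or> y \<noteq> TD) \<and> good (y # xs))"

lemma good_Cons: "good (x # xs) \<longleftrightarrow> good xs \<and> (xs \<noteq> [] \<longrightarrow> \<not> (x = TU \<and> hd xs = TD))"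
  by (cases xs) auto

lemma good_append: "good (xs @ ys) \<longleftrightarrow> good xs \<and> good ys \<and> (xs \<noteq> [] \<longrightarrow> ys \<noteq> [] \<longrightarrow> \<not> (last xs = TU \<and> hd ys = TD))"
proof (induction xs)
  case Nil then show ?case by simp
next
  case (Cons x xs)
  show ?case
  proof (cases xs)
    case Nil then show ?thesis using Cons by (simp add: good_Cons)
  next
    case (Cons y ys) then show ?thesis using Cons.IH by (auto simp: good_Cons)
  qed
qed

lemma good_noTD: "TD \<notin> set xs \<Longrightarrow> good xs"
  by (induction xs rule: good.induct) auto

fun tr :: "tok \<Rightarrow> int" where
  "tr TU = 1" | "tr TD = -1" | "tr TH = 0" | "tr TR = 0"

definition ht :: "tok list \<Rightarrow> int" where "ht xs = sum_list (map tr xs)"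

lemma ht_simps[simp]: "ht [] = 0" "ht (t # xs) = tr t + ht xs" "ht (xs @ ys) = ht xs + ht ys"
  unfolding ht_def by auto

fun balh :: "int \<Rightarrow> tok list \<Rightarrow> bool" where
  "balh h [] = True"
| "balh h (t # xs) = (0 \<le> h + tr t \<and> balh (h + tr t) xs)"

lemma balh_append: "balh h (xs @ ys) \<longleftrightarrow> balh h xs \<and> balh (h + ht xs) ys"
  by (induction xs arbitrary: h) (auto simp: add.assoc)

lemma balh_noTD: "TD \<notin> set xs \<Longrightarrow> 0 \<le> h \<Longrightarrow> balh h xs"
proof (induction xs arbitrary: h)
  case Nil then show ?case by simp
next
  case (Cons t xs)
  have "0 \<le> tr t" using Cons.prems by (cases t) auto
  then show ?case using Cons by auto
qed

lemma ht_noTD: "TD \<notin> set xs \<Longrightarrow> 0 \<le> ht xs"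
proof (induction xs)
  case Nil then show ?case by simp
next
  case (Cons t xs)
  have "0 \<le> tr t" using Cons.prems by (cases t) auto
  then show ?case using Cons by auto
qed

fun wid :: "tok \<Rightarrow> nat" where
  "wid TH = 2" | "wid TR = 2" | "wid TU = 1" | "wid TD = 1"

definition widl :: "tok list \<Rightarrow> nat" where "widl xs = sum_list (map wid xs)"

lemma widl_simps[simp]: "widl [] = 0" "widl (t # xs) = wid t + widl xs" "widl (xs @ ys) = widl xs + widl ys"
  unfolding widl_def by auto

lemma widl_XY: "length (Xw xs) + length (Yw xs) = widl xs"
  by (induction xs rule: Xw.induct) auto

definition vp :: "nat \<Rightarrow> tok list \<Rightarrow> tok list \<Rightarrow> bool" where
  "vp n \<alpha> \<mu> \<longleftrightarrow> good \<alpha> \<and> (\<mu> = [] \<or> \<mu> = [TH] \<or> \<mu> = [TR]) \<and> (\<mu> = [] \<longrightarrow> \<alpha> \<noteq> [] \<longrightarrow> last \<alpha> \<noteq> TU)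
     \<and> balh 0 \<alpha> \<and> 2 * widl \<alpha> + widl \<mu> = 2 * n"

definition core :: "tok list \<Rightarrow> tok list \<Rightarrow> letter list" where
  "core \<alpha> \<mu> = Xw \<alpha> @ Xw \<mu> @ rev (Yw \<alpha>)"

definition wd :: "tok list \<Rightarrow> tok list \<Rightarrow> letter list" where
  "wd \<alpha> \<mu> = core \<alpha> \<mu> @ [Lh]"

lemma wd_length: "vp n \<alpha> \<mu> \<Longrightarrow> length (wd \<alpha> \<mu>) = n + 1"
proof -
  assume v: "vp n \<alpha> \<mu>"
  have "length (Xw \<mu>) * 2 = widl \<mu>" using v unfolding vp_def by auto
  then show ?thesis using v widl_XY[of \<alpha>] unfolding vp_def wd_def core_def by simp
qed

lemma core_TH: "core (TH # \<rho>) \<mu> = Lh # core \<rho> \<mu> @ [Lh]" unfolding core_def by simp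
lemma core_TR: "core (TR # \<rho>) \<mu> = Lr # core \<rho> \<mu> @ [Lr]" unfolding core_def by simp
lemma core_TU: "core (TU # \<rho>) \<mu> = Lu # core \<rho> \<mu>" unfolding core_def by simp
lemma core_TD: "core (TD # \<rho>) \<mu> = core \<rho> \<mu> @ [Lu]" unfolding core_def by simp

lemma Xw_noLu: "Lu \<notin> set (Xw xs) \<longleftrightarrow> TU \<notin> set xs"
  by (induction xs rule: Xw.induct) auto
lemma Yw_noLu: "Lu \<notin> set (Yw xs) \<longleftrightarrow> TD \<notin> set xs"
  by (induction xs rule: Yw.induct) auto
lemma Xw_mu: "\<mu> = [] \<or> \<mu> = [TH] \<or> \<mu> = [TR] \<Longrightarrow> Lu \<notin> set (Xw \<mu>)" by auto


lemma widl_0: assumes "widl xs = 0" shows "xs = []"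
proof (cases xs)
  case (Cons t ys) then show ?thesis using assms by (cases t) auto
qed auto

lemma mu_cases: "\<mu> = [] \<or> \<mu> = [TH] \<or> \<mu> = [TR] \<Longrightarrow> Lu \<notin> set (Xw \<mu>)" by auto

lemma vp_TH: assumes "vp n (TH # \<rho>) \<mu>" shows "2 \<le> n" "vp (n-2) \<rho> \<mu>"
proof -
  show "2 \<le> n" using assms unfolding vp_def by simp
  show "vp (n-2) \<rho> \<mu>" using assms unfolding vp_def by (auto simp: good_Cons)
qed

lemma vp_TR: assumes "vp n (TR # \<rho>) \<mu>" shows "2 \<le> n" "vp (n-2) \<rho> \<mu>"
proof -
  show "2 \<le> n" using assms unfolding vp_def by simp
  show "vp (n-2) \<rho> \<mu>" using assms unfolding vp_def by (auto simp: good_Cons)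
qed

lemma vp_TD: "\<not> vp n (TD # \<rho>) \<mu>"
  unfolding vp_def by simp

lemma wd_TH: "wd (TH # \<rho>) \<mu> = Lh # wd \<rho> \<mu> @ Lh # []"
  unfolding wd_def core_TH by simp
lemma wd_TR: "wd (TR # \<rho>) \<mu> = Lr # core \<rho> \<mu> @ Lr # [Lh]"
  unfolding wd_def core_TR by simp
lemma wd_TU: "wd (TU # \<rho>) \<mu> = Lu # wd \<rho> \<mu>"
  unfolding wd_def core_TU by simp

lemma last_in_Yw: "xs \<noteq> [] \<Longrightarrow> last xs \<in> {TH, TR} \<Longrightarrow> Yw xs \<noteq> []"
proof -
  assume a: "xs \<noteq> []" "last xs \<in> {TH, TR}"
  then have "xs = butlast xs @ [last xs]" by simp
  then have "Yw xs = Yw (butlast xs) @ Yw [last xs]" by (metis Yw_append)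
  then show ?thesis using a(2) by auto
qed

lemma Xw_noTD_len: "TD \<notin> set xs \<Longrightarrow> length (Xw xs) = length xs"
  by (induction xs rule: Xw.induct) auto

lemma vp_GW: "vp n \<alpha> \<mu> \<Longrightarrow> GW (wd \<alpha> \<mu>)"
proof (induction n arbitrary: \<alpha> \<mu> rule: less_induct)
  case (less n)
  note v = less.prems
  have mu: "\<mu> = [] \<or> \<mu> = [TH] \<or> \<mu> = [TR]" using v unfolding vp_def by simp
  show ?case
  proof (cases \<alpha>)
    case Nil
    consider "\<mu> = []" | "\<mu> = [TH]" | "\<mu> = [TR]" using mu by blast
    then show ?thesis
    proof cases
      case 1 then show ?thesis using Nil GW_h by (simp add: wd_def core_def)
    next
      case 2
      have "GW (Lh # [] @ Lh # [])" by (rule GEN2) (auto simp: cls_def GW_nil)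
      then show ?thesis using Nil 2 by (simp add: wd_def core_def)
    next
      case 3
      have "GW (Lr # [Lh])" by (rule GEN1) (auto simp: cls_def GW_h)
      then show ?thesis using Nil 3 by (simp add: wd_def core_def)
    qed
  next
    case (Cons t \<rho>)
    show ?thesis
    proof (cases t)
      case TH
      have n: "2 \<le> n" "vp (n-2) \<rho> \<mu>" using vp_TH v Cons TH by auto
      have g: "GW (wd \<rho> \<mu> @ [])" using less.IH[OF _ n(2)] n(1) by simp
      have "GW (Lh # wd \<rho> \<mu> @ Lh # [])" by (rule GEN2[OF _ _ _ g]) (auto simp: cls_def)
      then show ?thesis using Cons TH wd_TH by simp
    next
      case TR
      have n: "2 \<le> n" "vp (n-2) \<rho> \<mu>" using vp_TR v Cons TR by auto
      have g: "GW (core \<rho> \<mu> @ [Lh])" using less.IH[OF _ n(2)] n(1) by (simp add: wd_def)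
      have "GW (Lr # core \<rho> \<mu> @ Lr # [Lh])" by (rule GEN2[OF _ _ _ g]) (auto simp: cls_def)
      then show ?thesis using Cons TR wd_TR by simp
    next
      case TD
      then show ?thesis using v Cons vp_TD by simp
    next
      case TU
      note \<alpha> = Cons[unfolded TU]
      have gd: "good (TU # \<rho>)" and bal: "balh 0 (TU # \<rho>)" and
        lst: "\<mu> = [] \<longrightarrow> last (TU # \<rho>) \<noteq> TU" and wid: "2 * widl (TU # \<rho>) + widl \<mu> = 2 * n"
        using v \<alpha> unfolding vp_def by auto
      show ?thesis
      proof (cases "TD \<in> set \<rho>")
        case True
        obtain \<beta>1 \<beta>2 where \<rho>: "\<rho> = \<beta>1 @ TD # \<beta>2" and nd: "TD \<notin> set \<beta>1"
          using split_list_first[OF True] by blast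
        have gd2: "good (TU # \<beta>1 @ TD # \<beta>2)" using gd \<rho> by simp
        have b1: "\<beta>1 \<noteq> []"
        proof
          assume "\<beta>1 = []" then show False using gd2 by simp
        qed
        have g1: "good \<beta>1" "good (TD # \<beta>2)" "last \<beta>1 \<noteq> TU"
          using gd2 b1 unfolding good_Cons[of TU] good_append by auto
        have lb1: "last \<beta>1 \<in> {TH, TR}"
        proof -
          have "last \<beta>1 \<in> set \<beta>1" using b1 by simp
          then have "last \<beta>1 \<noteq> TD" using nd by auto
          then show ?thesis using g1(3) by (cases "last \<beta>1") auto
        qed
        have y1: "Yw \<beta>1 \<noteq> []" using last_in_Yw[OF b1 lb1] .
        define \<alpha>0 where "\<alpha>0 = \<beta>1 @ \<beta>2"
        have v0: "vp (n-2) \<alpha>0 \<mu>" and n2: "2 \<le> n"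
        proof -
          have "good \<alpha>0" unfolding \<alpha>0_def good_append using g1 b1 by (auto simp: good_Cons)
          moreover have "\<mu> = [] \<longrightarrow> \<alpha>0 \<noteq> [] \<longrightarrow> last \<alpha>0 \<noteq> TU"
            using lst g1(3) b1 unfolding \<alpha>0_def \<rho> by (cases "\<beta>2 = []") auto
          moreover have "balh 0 \<alpha>0"
          proof -
            have "balh (1 + ht \<beta>1) (TD # \<beta>2)" using bal unfolding \<rho> by (simp add: balh_append)
            then have "balh (ht \<beta>1) \<beta>2" by simp
            moreover have "balh 0 \<beta>1" using balh_noTD[OF nd] by simp
            ultimately show ?thesis unfolding \<alpha>0_def by (simp add: balh_append)
          qed
          moreover have "2 * widl \<alpha>0 + widl \<mu> = 2 * (n - 2)" "2 \<le> n" using wid unfolding \<alpha>0_def \<rho> by auto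
          ultimately show "vp (n-2) \<alpha>0 \<mu>" "2 \<le> n" using mu unfolding vp_def by auto
        qed
        define A where "A = Xw \<beta>1 @ Xw \<beta>2 @ Xw \<mu> @ rev (Yw \<beta>2)"
        define B where "B = rev (Yw \<beta>1) @ [Lh]"
        have e1: "wd \<alpha> \<mu> = Lu # A @ Lu # B" unfolding \<alpha> \<rho> A_def B_def wd_def core_def by simp
        have e2: "A @ B = wd \<alpha>0 \<mu>" unfolding \<alpha>0_def A_def B_def wd_def core_def by simp
        have uB: "Lu \<notin> set B" unfolding B_def using Yw_noLu[of \<beta>1] nd by simp
        have lB: "2 \<le> length B" unfolding B_def using y1 by (cases "Yw \<beta>1") auto
        have g: "GW (A @ B)" using less.IH[OF _ v0] n2 e2 by simp
        have "GW (Lu # A @ Lu # B)" by (rule GEN2[OF uB uB _ g]) (use lB cls_u[of "length B"] in simp)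
        then show ?thesis using e1 by simp
      next
        case nTD: False
        show ?thesis
        proof (cases "TU \<in> set \<rho>")
          case True
          obtain \<beta>1 \<beta>2 where \<rho>: "\<rho> = \<beta>1 @ TU # \<beta>2" and nu: "TU \<notin> set \<beta>2"
            using split_list_last[OF True] by blast
          define \<alpha>0 where "\<alpha>0 = \<beta>1 @ \<beta>2"
          have nd0: "TD \<notin> set \<alpha>0" using nTD unfolding \<alpha>0_def \<rho> by simp
          have nd2: "TD \<notin> set \<beta>2" using nTD unfolding \<rho> by simp
          have b2: "\<beta>2 \<noteq> [] \<or> \<mu> \<noteq> []" using lst unfolding \<rho> by auto
          have v0: "vp (n-2) \<alpha>0 \<mu>" and n2: "2 \<le> n"
          proof -
            have "good \<alpha>0" using good_noTD[OF nd0] .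
            moreover have "\<mu> = [] \<longrightarrow> \<alpha>0 \<noteq> [] \<longrightarrow> last \<alpha>0 \<noteq> TU"
            proof (intro impI)
              assume "\<mu> = []" "\<alpha>0 \<noteq> []"
              then have "\<beta>2 \<noteq> []" using b2 by simp
              then have "last \<alpha>0 = last \<beta>2" "last \<beta>2 \<in> set \<beta>2" unfolding \<alpha>0_def by auto
              then show "last \<alpha>0 \<noteq> TU" using nu by auto
            qed
            moreover have "balh 0 \<alpha>0" using balh_noTD[OF nd0] by simp
            moreover have "2 * widl \<alpha>0 + widl \<mu> = 2 * (n - 2)" "2 \<le> n" using wid unfolding \<alpha>0_def \<rho> by auto
            ultimately show "vp (n-2) \<alpha>0 \<mu>" "2 \<le> n" using mu unfolding vp_def by auto
          qed
          define A where "A = Xw \<beta>1"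
          define B where "B = Xw \<beta>2 @ Xw \<mu> @ rev (Yw \<beta>2) @ rev (Yw \<beta>1) @ [Lh]"
          have e1: "wd \<alpha> \<mu> = Lu # A @ Lu # B" unfolding \<alpha> \<rho> A_def B_def wd_def core_def by simp
          have e2: "A @ B = wd \<alpha>0 \<mu>" unfolding \<alpha>0_def A_def B_def wd_def core_def by simp
          have uB: "Lu \<notin> set B" unfolding B_def using Yw_noLu[of \<beta>1] Yw_noLu[of \<beta>2] Xw_noLu[of \<beta>2] nu nd0 mu_cases[OF mu]
            unfolding \<alpha>0_def by auto
          have lB: "2 \<le> length B"
          proof (cases "\<beta>2 = []")
            case True then have "\<mu> \<noteq> []" using b2 by simp
            then have "Xw \<mu> \<noteq> []" using mu by auto
            then show ?thesis unfolding B_def by (cases "Xw \<mu>") auto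
          next
            case False then have "Xw \<beta>2 \<noteq> []" using Xw_noTD_len[OF nd2] by auto
            then show ?thesis unfolding B_def by (cases "Xw \<beta>2") auto
          qed
          have g: "GW (A @ B)" using less.IH[OF _ v0] n2 e2 by simp
          have "GW (Lu # A @ Lu # B)" by (rule GEN2[OF uB uB _ g]) (use lB cls_u[of "length B"] in simp)
          then show ?thesis using e1 by simp
        next
          case nTU: False
          have v0: "vp (n-1) \<rho> \<mu>" and n1: "1 \<le> n"
          proof -
            have "good \<rho>" using good_noTD[OF nTD] .
            moreover have "\<mu> = [] \<longrightarrow> \<rho> \<noteq> [] \<longrightarrow> last \<rho> \<noteq> TU" using lst by auto
            moreover have "balh 0 \<rho>" using balh_noTD[OF nTD] by simp
            moreover have "2 * widl \<rho> + widl \<mu> = 2 * (n - 1)" "1 \<le> n" using wid by auto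
            ultimately show "vp (n-1) \<rho> \<mu>" "1 \<le> n" using mu unfolding vp_def by auto
          qed
          have n2: "2 \<le> n"
          proof (rule ccontr)
            assume "\<not> 2 \<le> n"
            then have "n = 1" using n1 by simp
            then have "widl \<rho> = 0" "widl \<mu> = 0" using wid by auto
            then have "\<rho> = []" "\<mu> = []" using widl_0 by auto
            then show False using lst by simp
          qed
          have uQ: "Lu \<notin> set (wd \<rho> \<mu>)" unfolding wd_def core_def
            using Xw_noLu[of \<rho>] Yw_noLu[of \<rho>] nTU nTD mu_cases[OF mu] by auto
          have lQ: "length (wd \<rho> \<mu>) = n" using wd_length[OF v0] n1 by simp
          have g: "GW (wd \<rho> \<mu>)" using less.IH[OF _ v0] n1 by simp
          have "GW (Lu # wd \<rho> \<mu>)" by (rule GEN1[OF uQ uQ _ g]) (use lQ n2 cls_u[of n] in simp)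
          then show ?thesis using \<alpha> wd_TU by simp
        qed
      qed
    qed
  qed
qed


definition cc :: "tok list \<Rightarrow> tok list \<Rightarrow> bool" where
  "cc \<alpha> \<mu> \<longleftrightarrow> good \<alpha> \<and> (\<mu> = [] \<or> \<mu> = [TH] \<or> \<mu> = [TR]) \<and> (\<mu> = [] \<longrightarrow> \<alpha> \<noteq> [] \<longrightarrow> last \<alpha> \<noteq> TU)"

lemma cc_tl: "cc (t # \<rho>) \<mu> \<Longrightarrow> cc \<rho> \<mu>"
  unfolding cc_def by (auto simp: good_Cons)

lemma hdY: "good (TU # \<rho>) \<Longrightarrow> Yw \<rho> \<noteq> [] \<Longrightarrow> hd (Yw \<rho>) \<noteq> Lu"
proof (induction \<rho>)
  case Nil then show ?case by simp
next
  case (Cons t \<rho>)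
  show ?case
  proof (cases t)
    case TU
    have "good (TU # \<rho>)" using Cons.prems TU by (auto simp: good_Cons)
    then show ?thesis using Cons TU by simp
  qed (use Cons in auto)
qed

lemma Yw_nil: "Yw \<rho> = [] \<Longrightarrow> t \<in> set \<rho> \<Longrightarrow> t = TU"
  by (induction \<rho> rule: Yw.induct) auto

lemma core_TU_last: assumes "cc (TU # \<rho>) \<mu>" shows "last (core (TU # \<rho>) \<mu>) \<noteq> Lu"
proof (cases "Yw \<rho> = []")
  case False
  have "last (core (TU # \<rho>) \<mu>) = hd (Yw \<rho>)" unfolding core_def using False by (simp add: last_rev)
  then show ?thesis using hdY False assms unfolding cc_def by simp
next
  case True
  have mu: "\<mu> = [] \<or> \<mu> = [TH] \<or> \<mu> = [TR]" using assms unfolding cc_def by simp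
  show ?thesis
  proof (cases "\<mu> = []")
    case True
    have "last (TU # \<rho>) = TU"
    proof (cases "\<rho> = []")
      case False then have "last \<rho> \<in> set \<rho>" by simp
      then show ?thesis using Yw_nil[OF \<open>Yw \<rho> = []\<close>] False by simp
    qed simp
    then show ?thesis using assms True unfolding cc_def by simp
  next
    case False
    then show ?thesis using mu True unfolding core_def by auto
  qed
qed

lemma core_inj: "cc \<alpha> \<mu> \<Longrightarrow> cc \<alpha>' \<mu>' \<Longrightarrow> core \<alpha> \<mu> = core \<alpha>' \<mu>' \<Longrightarrow> \<alpha> = \<alpha>' \<and> \<mu> = \<mu>'"
proof (induction \<alpha> arbitrary: \<alpha>')
  have nilcase: "False" if "cc (t' # \<rho>') \<mu>'" "cc [] \<mu>" "core [] \<mu> = core (t' # \<rho>') \<mu>'" for t' \<rho>' \<mu>' \<mu>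
  proof -
    have mu: "\<mu> = [] \<or> \<mu> = [TH] \<or> \<mu> = [TR]" using that(2) unfolding cc_def by simp
    have l: "length (Xw \<mu>) \<le> 1" using mu by auto
    have c: "core [] \<mu> = Xw \<mu>" unfolding core_def by simp
    have e: "Xw \<mu> = core (t' # \<rho>') \<mu>'" using that(3) c by simp
    show False
    proof (cases t')
      case TH
      have "2 \<le> length (core (t' # \<rho>') \<mu>')" using TH by (simp add: core_TH)
      then show ?thesis using e l by simp
    next
      case TR
      have "2 \<le> length (core (t' # \<rho>') \<mu>')" using TR by (simp add: core_TR)
      then show ?thesis using e l by simp
    next
      case TU
      have "Lu \<in> set (core (t' # \<rho>') \<mu>')" using TU by (simp add: core_TU)
      then have "Lu \<in> set (Xw \<mu>)" using e by simp
      then show ?thesis using mu_cases[OF mu] by simp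
    next
      case TD
      have "Lu \<in> set (core (t' # \<rho>') \<mu>')" using TD by (simp add: core_TD)
      then have "Lu \<in> set (Xw \<mu>)" using e by simp
      then show ?thesis using mu_cases[OF mu] by simp
    qed
  qed
  {
    case Nil
    show ?case
    proof (cases \<alpha>')
      case Nil
      have "Xw \<mu> = Xw \<mu>'" using Nil.prems(3) Nil unfolding core_def by simp
      moreover have "\<mu> = [] \<or> \<mu> = [TH] \<or> \<mu> = [TR]" "\<mu>' = [] \<or> \<mu>' = [TH] \<or> \<mu>' = [TR]"
        using Nil.prems unfolding cc_def by auto
      ultimately show ?thesis using Nil by auto
    next
      case (Cons t' \<rho>')
      then show ?thesis using nilcase Nil.prems by blast
    qed
  next
    case (Cons t \<rho>)
    show ?case
    proof (cases \<alpha>')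
      case Nil
      have "core [] \<mu>' = core (t # \<rho>) \<mu>" using Cons.prems(3) Nil by simp
      then show ?thesis using nilcase[OF Cons.prems(1)] Cons.prems(2) Nil by blast
    next
      case (Cons t' \<rho>')
      note pr = Cons.prems[unfolded Cons]
      have cc1: "cc \<rho> \<mu>" "cc \<rho>' \<mu>'" using pr(1,2) cc_tl by auto
      show ?thesis
      proof (cases "t = t'")
        case True
        have "core \<rho> \<mu> = core \<rho>' \<mu>'"
          using pr(3) True by (cases t) (auto simp: core_TH core_TR core_TU core_TD)
        then show ?thesis using Cons.IH[OF cc1(1) cc1(2)] Cons True by simp
      next
        case False
        have hds: "hd (core (TH # r) m) = Lh" "hd (core (TR # r) m) = Lr" "hd (core (TU # r) m) = Lu" for r m
          by (simp_all add: core_TH core_TR core_TU)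
        have lsts: "last (core (TH # r) m) = Lh" "last (core (TR # r) m) = Lr" "last (core (TD # r) m) = Lu" for r m
          by (simp_all add: core_TH core_TR core_TD)
        have l1: "t = TU \<Longrightarrow> last (core (t # \<rho>) \<mu>) \<noteq> Lu" using core_TU_last pr(1) by simp
        have l2: "t' = TU \<Longrightarrow> last (core (t' # \<rho>') \<mu>') \<noteq> Lu" using core_TU_last pr(2) by simp
        have eh: "hd (core (t # \<rho>) \<mu>) = hd (core (t' # \<rho>') \<mu>')" "last (core (t # \<rho>) \<mu>) = last (core (t' # \<rho>') \<mu>')"
          using pr(3) by simp_all
        show ?thesis using False eh l1 l2 hds lsts by (cases t; cases t') simp_all
      qed
    qed
  }
qed

lemma vp_cc: "vp n \<alpha> \<mu> \<Longrightarrow> cc \<alpha> \<mu>" unfolding vp_def cc_def by simp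

lemma wd_inj: "vp n \<alpha> \<mu> \<Longrightarrow> vp n' \<alpha>' \<mu>' \<Longrightarrow> wd \<alpha> \<mu> = wd \<alpha>' \<mu>' \<Longrightarrow> \<alpha> = \<alpha>' \<and> \<mu> = \<mu>'"
  using core_inj[OF vp_cc vp_cc] unfolding wd_def by blast


lemma Xw_take_noTD: "TD \<notin> set xs \<Longrightarrow> Xw (take j xs) = take j (Xw xs)"
proof (induction xs arbitrary: j)
  case Nil then show ?case by simp
next
  case (Cons t xs)
  show ?case
  proof (cases j)
    case (Suc j') then show ?thesis using Cons by (cases t) auto
  qed simp
qed

lemma Xw_drop_noTD: "TD \<notin> set xs \<Longrightarrow> Xw (drop j xs) = drop j (Xw xs)"
proof (induction xs arbitrary: j)
  case Nil then show ?case by simp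
next
  case (Cons t xs)
  show ?case
  proof (cases j)
    case (Suc j') then show ?thesis using Cons by (cases t) auto
  qed simp
qed

lemma Yw_Cons_nonTU: "t \<noteq> TU \<Longrightarrow> \<exists>l. Yw (t # xs) = l # Yw xs"
  by (cases t) auto

lemma splitY: "1 \<le> c \<Longrightarrow> c \<le> length (Yw xs) \<Longrightarrow>
  \<exists>i \<le> length xs. Yw (take i xs) = take c (Yw xs) \<and> take i xs \<noteq> [] \<and> last (take i xs) \<noteq> TU"
proof (induction xs arbitrary: c)
  case Nil then show ?case by simp
next
  case (Cons t xs)
  show ?case
  proof (cases "t = TU")
    case True
    then have "c \<le> length (Yw xs)" using Cons.prems by simp
    then obtain i where i: "i \<le> length xs" "Yw (take i xs) = take c (Yw xs)" "take i xs \<noteq> []" "last (take i xs) \<noteq> TU"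
      using Cons.IH Cons.prems(1) by blast
    then show ?thesis using True by (intro exI[of _ "Suc i"]) auto
  next
    case False
    obtain l where l: "Yw (t # xs) = l # Yw xs" using Yw_Cons_nonTU[OF False] by blast
    show ?thesis
    proof (cases "c = 1")
      case True
      then show ?thesis using False l by (intro exI[of _ 1]) (cases t; auto)
    next
      case c1: False
      then have "1 \<le> c - 1" "c - 1 \<le> length (Yw xs)" using Cons.prems l by auto
      then obtain i where i: "i \<le> length xs" "Yw (take i xs) = take (c-1) (Yw xs)" "take i xs \<noteq> []" "last (take i xs) \<noteq> TU"
        using Cons.IH by blast
      have "Yw (take (Suc i) (t # xs)) = l # take (c-1) (Yw xs)" using l i(2) by (cases t) auto
      also have "\<dots> = take c (Yw (t # xs))" using l c1 Cons.prems(1) by (cases c) auto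
      finally show ?thesis using i by (intro exI[of _ "Suc i"]) auto
    qed
  qed
qed


lemma ins_exists:
  assumes v: "vp m \<alpha>0 \<mu>" and nu: "Lu \<notin> set (drop j (wd \<alpha>0 \<mu>))" and jl: "j + 2 \<le> length (wd \<alpha>0 \<mu>)"
  shows "\<exists>\<alpha>. vp (m+2) \<alpha> \<mu> \<and> wd \<alpha> \<mu> = Lu # take j (wd \<alpha>0 \<mu>) @ Lu # drop j (wd \<alpha>0 \<mu>)"
proof -
  define X0 where "X0 = Xw \<alpha>0"
  define M where "M = Xw \<mu>"
  define Y0 where "Y0 = Yw \<alpha>0"
  have q0: "wd \<alpha>0 \<mu> = X0 @ M @ rev Y0 @ [Lh]" unfolding wd_def core_def X0_def M_def Y0_def by simp
  have mu: "\<mu> = [] \<or> \<mu> = [TH] \<or> \<mu> = [TR]" and gd: "good \<alpha>0" and lst: "\<mu> = [] \<longrightarrow> \<alpha>0 \<noteq> [] \<longrightarrow> last \<alpha>0 \<noteq> TU"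
    and bal: "balh 0 \<alpha>0" and wid: "2 * widl \<alpha>0 + widl \<mu> = 2 * m" using v unfolding vp_def by auto
  show ?thesis
  proof (cases "j < length X0 \<or> (j = length X0 \<and> \<mu> \<noteq> [])")
    case True
    then have jX: "j \<le> length X0" by auto
    have dq: "drop j (wd \<alpha>0 \<mu>) = drop j X0 @ M @ rev Y0 @ [Lh]" unfolding q0 using jX by simp
    have tq: "take j (wd \<alpha>0 \<mu>) = take j X0" unfolding q0 using jX by simp
    have "Lu \<notin> set Y0" using nu dq by simp
    then have nd: "TD \<notin> set \<alpha>0" using Yw_noLu unfolding Y0_def by blast
    define \<alpha> where "\<alpha> = TU # take j \<alpha>0 @ TU # drop j \<alpha>0"
    have su: "set (take j \<alpha>0) \<union> set (drop j \<alpha>0) = set \<alpha>0" using set_append[of "take j \<alpha>0" "drop j \<alpha>0"] by simp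
    have ndA: "TD \<notin> set \<alpha>" unfolding \<alpha>_def using nd su by auto
    have e: "wd \<alpha> \<mu> = Lu # take j (wd \<alpha>0 \<mu>) @ Lu # drop j (wd \<alpha>0 \<mu>)"
    proof -
      have "Yw (take j \<alpha>0) @ Yw (drop j \<alpha>0) = Y0" unfolding Y0_def using Yw_append[of "take j \<alpha>0" "drop j \<alpha>0"] by simp
      then have "wd \<alpha> \<mu> = Lu # Xw (take j \<alpha>0) @ Lu # Xw (drop j \<alpha>0) @ M @ rev Y0 @ [Lh]"
        unfolding \<alpha>_def wd_def core_def M_def by (simp flip: rev_append)
      then show ?thesis unfolding dq tq using Xw_take_noTD[OF nd] Xw_drop_noTD[OF nd] X0_def by simp
    qed
    have "vp (m+2) \<alpha> \<mu>"
      unfolding vp_def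
    proof (intro conjI)
      show "good \<alpha>" using good_noTD[OF ndA] .
      show "\<mu> = [] \<or> \<mu> = [TH] \<or> \<mu> = [TR]" using mu .
      show "\<mu> = [] \<longrightarrow> \<alpha> \<noteq> [] \<longrightarrow> last \<alpha> \<noteq> TU"
      proof (intro impI)
        assume m0: "\<mu> = []"
        then have jl2: "j < length X0" using True by simp
        have lX: "length X0 = length \<alpha>0" unfolding X0_def using Xw_noTD_len[OF nd] .
        then have dne: "drop j \<alpha>0 \<noteq> []" using jl2 by simp
        then have la: "last \<alpha> = last (drop j \<alpha>0)" unfolding \<alpha>_def by simp
        have "last (drop j \<alpha>0) \<in> set (drop j \<alpha>0)" by (rule last_in_set[OF dne])
        moreover have "Lu \<notin> set (Xw (drop j \<alpha>0))" using nu dq Xw_drop_noTD[OF nd] X0_def by simp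
        then have "TU \<notin> set (drop j \<alpha>0)" using Xw_noLu by blast
        ultimately show "last \<alpha> \<noteq> TU" using la by auto
      qed
      show "balh 0 \<alpha>" using balh_noTD[OF ndA] by simp
      have w2: "widl (take j \<alpha>0) + widl (drop j \<alpha>0) = widl \<alpha>0"
        using widl_simps(3)[of "take j \<alpha>0" "drop j \<alpha>0"] by simp
      have "widl \<alpha> = widl \<alpha>0 + 2" unfolding \<alpha>_def using w2 by simp
      then show "2 * widl \<alpha> + widl \<mu> = 2 * (m + 2)" using wid by simp
    qed
    then show ?thesis using e by blast
  next
    case False
    have jge: "length X0 + length M \<le> j" using False mu unfolding M_def by auto
    define s where "s = j - length X0 - length M"
    have lq: "length (wd \<alpha>0 \<mu>) = length X0 + length M + length Y0 + 1" unfolding q0 by simp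
    have sY: "s < length Y0" using jl lq jge unfolding s_def by simp
    have dq: "drop j (wd \<alpha>0 \<mu>) = drop s (rev Y0) @ [Lh]"
    proof -
      have "j = length (X0 @ M) + s" using jge unfolding s_def by simp
      then show ?thesis unfolding q0 using sY by (simp add: drop_append)
    qed
    have tq: "take j (wd \<alpha>0 \<mu>) = X0 @ M @ take s (rev Y0)"
    proof -
      have "j = length (X0 @ M) + s" using jge unfolding s_def by simp
      then show ?thesis unfolding q0 using sY by (simp add: take_append)
    qed
    define c where "c = length Y0 - s"
    have c1: "1 \<le> c" "c \<le> length Y0" using sY unfolding c_def by auto
    have dY: "drop s (rev Y0) = rev (take c Y0)" unfolding c_def by (simp add: drop_rev)
    have tY: "take s (rev Y0) = rev (drop c Y0)" unfolding c_def using sY by (simp add: take_rev)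
    have nuY: "Lu \<notin> set (take c Y0)" using nu dq dY by simp
    obtain i where i: "i \<le> length \<alpha>0" "Yw (take i \<alpha>0) = take c Y0" "take i \<alpha>0 \<noteq> []" "last (take i \<alpha>0) \<noteq> TU"
      using splitY[OF c1[unfolded Y0_def]] unfolding Y0_def by blast
    define \<beta>1 where "\<beta>1 = take i \<alpha>0"
    define \<beta>2 where "\<beta>2 = drop i \<alpha>0"
    have a0: "\<alpha>0 = \<beta>1 @ \<beta>2" unfolding \<beta>1_def \<beta>2_def by simp
    have Y1: "Yw \<beta>1 = take c Y0" using i(2) unfolding \<beta>1_def .
    have Y2: "Yw \<beta>2 = drop c Y0"
    proof -
      have y: "Y0 = Yw \<beta>1 @ Yw \<beta>2" unfolding Y0_def a0 by simp
      have l: "length (Yw \<beta>1) = c" using Y1 c1(2) by simp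
      have "drop c Y0 = drop c (Yw \<beta>1 @ Yw \<beta>2)" using y by simp
      also have "\<dots> = Yw \<beta>2" using l by simp
      finally show ?thesis by simp
    qed
    have "Lu \<notin> set (Yw \<beta>1)" using nuY Y1 by simp
    then have nd1: "TD \<notin> set \<beta>1" using Yw_noLu by blast
    have b1: "\<beta>1 \<noteq> []" "last \<beta>1 \<noteq> TU" using i unfolding \<beta>1_def by auto
    have "last \<beta>1 \<in> set \<beta>1" "hd \<beta>1 \<in> set \<beta>1" using b1(1) by simp_all
    then have lb1: "last \<beta>1 \<noteq> TD" and hb1: "hd \<beta>1 \<noteq> TD" using nd1 by auto
    define \<alpha> where "\<alpha> = TU # \<beta>1 @ TD # \<beta>2"
    have e: "wd \<alpha> \<mu> = Lu # take j (wd \<alpha>0 \<mu>) @ Lu # drop j (wd \<alpha>0 \<mu>)"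
    proof -
      have "wd \<alpha> \<mu> = Lu # Xw \<beta>1 @ Xw \<beta>2 @ Xw \<mu> @ rev (Yw \<beta>2) @ Lu # rev (Yw \<beta>1) @ [Lh]"
        unfolding \<alpha>_def wd_def core_def by simp
      moreover have "take j (wd \<alpha>0 \<mu>) = Xw \<beta>1 @ Xw \<beta>2 @ Xw \<mu> @ rev (Yw \<beta>2)"
        using tq tY Y2 unfolding X0_def M_def a0 by simp
      moreover have "drop j (wd \<alpha>0 \<mu>) = rev (Yw \<beta>1) @ [Lh]" using dq dY Y1 by simp
      ultimately show ?thesis by simp
    qed
    have g12: "good \<beta>1" "good \<beta>2" using gd unfolding a0 good_append by auto
    have "vp (m+2) \<alpha> \<mu>"
      unfolding vp_def
    proof (intro conjI)
      show "good \<alpha>" unfolding \<alpha>_def good_Cons good_append using g12 b1 hb1 by (simp add: good_Cons)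
      show "\<mu> = [] \<or> \<mu> = [TH] \<or> \<mu> = [TR]" using mu .
      show "\<mu> = [] \<longrightarrow> \<alpha> \<noteq> [] \<longrightarrow> last \<alpha> \<noteq> TU"
      proof (cases "\<beta>2 = []")
        case True then show ?thesis unfolding \<alpha>_def by simp
      next
        case False
        then have "last \<alpha> = last \<alpha>0" unfolding \<alpha>_def a0 by simp
        moreover have "\<alpha>0 \<noteq> []" using b1 a0 by simp
        ultimately show ?thesis using lst by simp
      qed
      show "balh 0 \<alpha>"
      proof -
        have "balh (ht \<beta>1) \<beta>2" using bal unfolding a0 balh_append by simp
        moreover have "balh 1 \<beta>1" using balh_noTD[OF nd1] by simp
        moreover have "0 \<le> ht \<beta>1" using ht_noTD[OF nd1] .
        ultimately show ?thesis unfolding \<alpha>_def by (simp add: balh_append)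
      qed
      show "2 * widl \<alpha> + widl \<mu> = 2 * (m + 2)" using wid unfolding \<alpha>_def a0 by simp
    qed
    then show ?thesis using e by blast
  qed
qed


lemma rb_h: "rb [Lh] = id"
proof
  fix i show "rb [Lh] i = id i"
  proof (cases "i = 1")
    case True then show ?thesis using rb_range[of 1 "[Lh]"] by simp
  next
    case False then show ?thesis using rb_out[of i "[Lh]"] by (cases i) auto
  qed
qed

lemma rb_nil: "rb [] = id"
  by (rule ext) (simp add: rb_out)

lemma vp_TH_intro: "vp m \<alpha>0 \<mu> \<Longrightarrow> vp (m+2) (TH # \<alpha>0) \<mu>"
  unfolding vp_def by (auto simp: good_Cons)

lemma vp_TR_intro: "vp m \<alpha>0 \<mu> \<Longrightarrow> vp (m+2) (TR # \<alpha>0) \<mu>"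
  unfolding vp_def by (auto simp: good_Cons)

lemma vp0: "vp 0 \<alpha> \<mu> \<Longrightarrow> \<alpha> = [] \<and> \<mu> = []"
  unfolding vp_def using widl_0 by auto

lemma surj_main: "1 \<le> N \<Longrightarrow> \<pi> permutes {1..N} \<Longrightarrow> (\<forall>i. \<pi> (\<pi> i) = i) \<Longrightarrow> nice N \<pi> \<Longrightarrow>
    \<exists>\<alpha> \<mu>. vp (N-1) \<alpha> \<mu> \<and> rb (wd \<alpha> \<mu>) = \<pi>"
proof (induction N arbitrary: \<pi> rule: less_induct)
  case (less N)
  have N1: "1 \<le> N" and p: "\<pi> permutes {1..N}" and inv: "\<And>i. \<pi> (\<pi> i) = i" and n: "nice N \<pi>"
    using less.prems by auto
  show ?case
  proof (cases "N = 1")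
    case True
    have "\<pi> = id"
    proof
      fix i show "\<pi> i = id i"
      proof (cases "i = 1")
        case True then show ?thesis using perm_range[OF p, of 1] \<open>N = 1\<close> by simp
      next
        case False then have "i \<notin> {1..N}" using \<open>N = 1\<close> by auto
        then show ?thesis using p by (simp add: permutes_not_in)
      qed
    qed
    moreover have "vp 0 [] []" unfolding vp_def by simp
    moreover have "wd [] [] = [Lh]" unfolding wd_def core_def by simp
    ultimately show ?thesis using True rb_h by (intro exI[of _ "[]"] exI[of _ "[]"]) simp
  next
    case False
    then have N2: "2 \<le> N" using N1 by simp
    define k where "k = \<pi> 1"
    have kr: "1 \<le> k" "k \<le> N" using perm_range[OF p, of 1] N1 unfolding k_def by auto
    show ?thesis
    proof (cases "k = 1")
      case True
      define \<sigma> where "\<sigma> = std1 N \<pi>"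
      have d: "\<sigma> permutes {1..N-1}" "\<And>i. \<sigma> (\<sigma> i) = i" "\<pi> = ins1 N \<sigma>"
        using dec1[OF p inv] True unfolding k_def \<sigma>_def by auto
      have ns: "nice (N-1) \<sigma>" using nice_std1[OF d(1)] n d(3) by simp
      have d2: "\<forall>i. \<sigma> (\<sigma> i) = i" using d(2) by simp
      have "\<exists>\<alpha> \<mu>. vp (N-1-1) \<alpha> \<mu> \<and> rb (wd \<alpha> \<mu>) = \<sigma>"
        by (rule less.IH) (use N2 d(1) d2 ns in auto)
      then obtain \<alpha>0 \<mu>0 where v0: "vp (N-1-1) \<alpha>0 \<mu>0" and r0: "rb (wd \<alpha>0 \<mu>0) = \<sigma>" by blast
      show ?thesis
      proof (cases "N = 2")
        case True
        then have "\<alpha>0 = [] \<and> \<mu>0 = []" using vp0 v0 by simp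
        then have "wd \<alpha>0 \<mu>0 = [Lh]" unfolding wd_def core_def by simp
        have "vp 1 [] [TR]" unfolding vp_def by simp
        moreover have "wd [] [TR] = Lr # [Lh]" unfolding wd_def core_def by simp
        moreover have "rb (Lr # [Lh]) = ins1 2 (rb [Lh])" using G2[of Lr "[Lh]"] by (simp add: numeral_2_eq_2)
        ultimately show ?thesis using True d(3) r0 \<open>wd \<alpha>0 \<mu>0 = [Lh]\<close> by (intro exI[of _ "[]"] exI[of _ "[TR]"]) auto
      next
        case N3: False
        then have N3: "3 \<le> N" using N2 by simp
        define q0 where "q0 = wd \<alpha>0 \<mu>0"
        have lq: "length q0 = N - 1" using wd_length[OF v0] N3 unfolding q0_def by simp
        have clq: "cl q0" using vp_GW[OF v0] unfolding GW_def q0_def by simp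
        have uq: "Lu \<notin> set q0"
        proof
          assume "Lu \<in> set q0"
          then obtain idx where idx: "idx < length q0" "q0 ! idx = Lu" by (meson in_set_conv_nth)
          define pp where "pp = Suc idx"
          have pp: "1 \<le> pp" "pp \<le> N - 1" using idx lq unfolding pp_def by auto
          have "q0 ! (pp - 1) = cls (ba (N-1) \<sigma> pp)" using clq pp lq r0 unfolding cl_def q0_def by simp
          then have "cls (ba (N-1) \<sigma> pp) = Lu" using idx unfolding pp_def by simp
          then have c2: "2 \<le> ba (N-1) \<sigma> pp" using cls_u by blast
          have "ba N \<pi> (Suc pp) = ba (N-1) \<sigma> pp" using ba_ins1_Suc[OF d(1) pp] d(3) by simp
          moreover have "ba N \<pi> (Suc pp) \<le> 1"
          proof -
            have "\<pi> (Suc pp) = Suc (\<sigma> pp)" using ins1_Suc[OF pp] d(3) by simp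
            moreover have "1 \<le> \<sigma> pp" using perm_range[OF d(1) pp] by simp
            ultimately have "\<pi> 1 < \<pi> (Suc pp)" using True k_def by simp
            moreover have "1 \<le> (1::nat)" "1 < Suc pp" "Suc pp \<le> N" using pp by auto
            ultimately show ?thesis using n unfolding nice_def by blast
          qed
          ultimately show False using c2 by simp
        qed
        have q0e: "q0 = Xw \<alpha>0 @ Xw \<mu>0 @ rev (Yw \<alpha>0) @ [Lh]" unfolding q0_def wd_def core_def by simp
        have nU: "TU \<notin> set \<alpha>0" using uq q0e Xw_noLu by auto
        have nD: "TD \<notin> set \<alpha>0" using uq q0e Yw_noLu by auto
        define \<alpha> where "\<alpha> = TU # \<alpha>0"
        have w0: "2 * widl \<alpha>0 + widl \<mu>0 = 2 * (N - 2)" and mu0: "\<mu>0 = [] \<or> \<mu>0 = [TH] \<or> \<mu>0 = [TR]"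
          using v0 unfolding vp_def by auto
        have "vp (N-1) \<alpha> \<mu>0"
          unfolding vp_def
        proof (intro conjI)
          show "good \<alpha>" unfolding \<alpha>_def by (rule good_noTD) (use nD in simp)
          show "\<mu>0 = [] \<or> \<mu>0 = [TH] \<or> \<mu>0 = [TR]" using mu0 .
          show "\<mu>0 = [] \<longrightarrow> \<alpha> \<noteq> [] \<longrightarrow> last \<alpha> \<noteq> TU"
          proof (intro impI)
            assume "\<mu>0 = []"
            then have "\<alpha>0 \<noteq> []" using w0 N3 by auto
            then have "last \<alpha> = last \<alpha>0" "last \<alpha>0 \<in> set \<alpha>0" unfolding \<alpha>_def by auto
            then show "last \<alpha> \<noteq> TU" using nU by auto
          qed
          show "balh 0 \<alpha>" by (rule balh_noTD) (use nD \<alpha>_def in auto)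
          show "2 * widl \<alpha> + widl \<mu>0 = 2 * (N - 1)" using w0 N3 unfolding \<alpha>_def by simp
        qed
        moreover have "rb (wd \<alpha> \<mu>0) = \<pi>"
        proof -
          have "wd \<alpha> \<mu>0 = Lu # q0" unfolding \<alpha>_def q0_def by (rule wd_TU)
          then have "rb (wd \<alpha> \<mu>0) = ins1 (length q0 + 1) (rb q0)" using G2[OF uq] by simp
          then show ?thesis using lq N3 r0 d(3) unfolding q0_def by simp
        qed
        ultimately show ?thesis by blast
      qed
    next
      case k1: False
      then have k2: "2 \<le> k" using kr by simp
      define \<sigma> where "\<sigma> = std2 N k \<pi>"
      have d: "\<sigma> permutes {1..N-2}" "\<And>i. \<sigma> (\<sigma> i) = i" "\<pi> = ins2 N k \<sigma>"
        using dec2[OF p inv _ k2] unfolding k_def \<sigma>_def by auto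
      have ns: "nice (N-2) \<sigma>" using nice_std2[OF d(1) k2 kr(2)] n d(3) by simp
      show ?thesis
      proof (cases "N = 2")
        case True
        then have "\<sigma> = id" using d(1) by simp
        have "vp 1 [] [TH]" unfolding vp_def by simp
        moreover have "wd [] [TH] = Lh # [] @ Lh # []" unfolding wd_def core_def by simp
        moreover have "rb (Lh # [] @ Lh # []) = ins2 2 2 (rb [])" using G1[of Lh "[]" "[]"] by (simp add: numeral_2_eq_2)
        moreover have "k = 2" using kr k2 True by simp
        ultimately show ?thesis using True d(3) rb_nil \<open>\<sigma> = id\<close> by (intro exI[of _ "[]"] exI[of _ "[TH]"]) auto
      next
        case N3: False
        then have N3: "3 \<le> N" using N2 by simp
        have d2: "\<forall>i. \<sigma> (\<sigma> i) = i" using d(2) by simp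
        have "\<exists>\<alpha> \<mu>. vp (N-2-1) \<alpha> \<mu> \<and> rb (wd \<alpha> \<mu>) = \<sigma>"
          by (rule less.IH) (use N3 d(1) d2 ns in auto)
        then obtain \<alpha>0 \<mu>0 where v0: "vp (N-2-1) \<alpha>0 \<mu>0" and r0: "rb (wd \<alpha>0 \<mu>0) = \<sigma>" by blast
        define q0 where "q0 = wd \<alpha>0 \<mu>0"
        have lq: "length q0 = N - 2" using wd_length[OF v0] N3 unfolding q0_def by simp
        have v0': "vp (N-3) \<alpha>0 \<mu>0" using v0 by (simp add: numeral_3_eq_3)
        have eN: "N - 1 = N - 3 + 2" using N3 by simp
        have eN2: "Suc (Suc (N - 2)) = N" "Suc (Suc (N - 3)) = N - 1" "Suc (Suc (Suc (N - 3))) = N" "N - 3 + 1 + 2 = N" "N - 3 + 2 = N - 1"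
          using N3 by auto
        consider "k = N" | "k = N - 1" | "k \<le> N - 2" using kr by linarith
        then show ?thesis
        proof cases
          case 1
          have "vp (N-1) (TH # \<alpha>0) \<mu>0" unfolding eN by (rule vp_TH_intro[OF v0'])
          moreover have "rb (wd (TH # \<alpha>0) \<mu>0) = \<pi>"
          proof -
            have "rb (wd (TH # \<alpha>0) \<mu>0) = ins2 (length q0 + length ([]::letter list) + 2) (length q0 + 2) (rb (q0 @ []))"
              unfolding wd_TH q0_def by (rule G1) simp
            then show ?thesis using lq N3 r0 d(3) 1 eN2 unfolding q0_def by simp
          qed
          ultimately show ?thesis by blast
        next
          case 2
          have "vp (N-1) (TR # \<alpha>0) \<mu>0" unfolding eN by (rule vp_TR_intro[OF v0'])
          moreover have "rb (wd (TR # \<alpha>0) \<mu>0) = \<pi>"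
          proof -
            have qc: "q0 = core \<alpha>0 \<mu>0 @ [Lh]" unfolding q0_def wd_def by simp
            have "rb (wd (TR # \<alpha>0) \<mu>0) = ins2 (length (core \<alpha>0 \<mu>0) + length [Lh] + 2) (length (core \<alpha>0 \<mu>0) + 2) (rb (core \<alpha>0 \<mu>0 @ [Lh]))"
              unfolding wd_TR by (rule G1) simp
            moreover have "length (core \<alpha>0 \<mu>0) = N - 3" using lq qc by simp
            ultimately show ?thesis using N3 r0 d(3) 2 qc eN2 unfolding q0_def by simp
          qed
          ultimately show ?thesis by blast
        next
          case 3
          define j where "j = k - 2"
          have clq: "cl q0" using vp_GW[OF v0] unfolding GW_def q0_def by simp
          have uq: "Lu \<notin> set (drop j q0)"
          proof
            assume "Lu \<in> set (drop j q0)"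
            then obtain t where t: "t < length (drop j q0)" "drop j q0 ! t = Lu" by (meson in_set_conv_nth)
            have jq: "j \<le> length q0" using 3 lq k2 unfolding j_def by simp
            have qt: "q0 ! (j + t) = Lu" using t jq by simp
            define pp where "pp = j + t + 1"
            have tl: "t < N - 2 - j" using t lq by simp
            have pp: "1 \<le> pp" "pp \<le> N - 2" "k \<le> pp + 1" using tl k2 unfolding pp_def j_def by arith+
            have "q0 ! (pp - 1) = cls (ba (N-2) \<sigma> pp)" using clq pp lq r0 unfolding cl_def q0_def by simp
            then have "cls (ba (N-2) \<sigma> pp) = Lu" using qt unfolding pp_def by simp
            then have c2: "2 \<le> ba (N-2) \<sigma> pp" using cls_u by blast
            have ad: "adj k pp = pp + 2" unfolding adj_def using pp by simp
            have "ba N \<pi> (adj k pp) = ba (N-2) \<sigma> pp" using ba_ins2_adj[OF d(1) k2 kr(2) pp(1,2)] d(3) by simp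
            moreover have "ba N \<pi> (adj k pp) \<le> 1"
            proof -
              have "\<pi> (adj k pp) = adj k (\<sigma> pp)" using ins2_adj[OF k2 kr(2) pp(1,2)] d(3) by simp
              moreover have "1 \<le> \<sigma> pp" using perm_range[OF d(1) pp(1,2)] by simp
              moreover have "2 \<le> adj k (\<sigma> pp)" using adj_ge2[OF \<open>1 \<le> \<sigma> pp\<close>] .
              ultimately have "\<pi> k < \<pi> (adj k pp)" using d(3) k2 by simp
              moreover have "1 \<le> k" "k < adj k pp" "adj k pp \<le> N" using pp ad k2 by auto
              ultimately show ?thesis using n unfolding nice_def by blast
            qed
            ultimately show False using c2 by simp
          qed
          have jl: "j + 2 \<le> length q0" using 3 lq k2 unfolding j_def by simp
          obtain \<alpha> where a: "vp (N-3+2) \<alpha> \<mu>0" "wd \<alpha> \<mu>0 = Lu # take j q0 @ Lu # drop j q0"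
            using ins_exists[OF v0' uq[unfolded q0_def] jl[unfolded q0_def]] unfolding q0_def by blast
          have "vp (N-1) \<alpha> \<mu>0" unfolding eN by (rule a(1))
          moreover have "rb (wd \<alpha> \<mu>0) = \<pi>"
          proof -
            have L1: "length (take j q0) + length (drop j q0) + 2 = N" using jl lq N3 by simp
            have L2: "length (take j q0) + 2 = k" using jl k2 unfolding j_def by simp
            have "rb (wd \<alpha> \<mu>0) = ins2 (length (take j q0) + length (drop j q0) + 2) (length (take j q0) + 2) (rb (take j q0 @ drop j q0))"
              unfolding a(2) by (rule G1[OF uq])
            also have "\<dots> = ins2 N k (rb q0)" unfolding L1 L2 append_take_drop_id ..
            also have "\<dots> = \<pi>" using r0 d(3) unfolding q0_def by simp
            finally show ?thesis .
          qed
          ultimately show ?thesis by blast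
        qed
      qed
    qed
  qed
qed


fun tw :: "tok \<Rightarrow> step list" where
  "tw TH = [H]" | "tw TR = [U, D]" | "tw TU = [U]" | "tw TD = [D]"

definition cat :: "tok list \<Rightarrow> step list" where "cat xs = concat (map tw xs)"

lemma cat_simps[simp]: "cat [] = []" "cat (t # xs) = tw t @ cat xs" "cat (xs @ ys) = cat xs @ cat ys"
  unfolding cat_def by auto

fun tf :: "tok \<Rightarrow> tok" where
  "tf TU = TD" | "tf TD = TU" | "tf TH = TH" | "tf TR = TR"

lemma tf_tf[simp]: "tf (tf t) = t" by (cases t) auto
lemma tf_comp[simp]: "tf \<circ> tf = id" by (rule ext) simp

definition path :: "tok list \<Rightarrow> tok list \<Rightarrow> step list" where
  "path \<alpha> \<mu> = cat (\<alpha> @ \<mu> @ rev (map tf \<alpha>))"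

lemma compress_U: assumes "ys = [] \<or> hd ys \<noteq> D" shows "compress (U # ys) = Lu # compress ys"
proof (cases ys)
  case (Cons a ys') then show ?thesis using assms by (cases a) auto
qed simp

lemma tw_ne[simp]: "tw t \<noteq> []" by (cases t) auto

lemma hd_cat: "\<tau> \<noteq> [] \<Longrightarrow> hd (cat \<tau>) = hd (tw (hd \<tau>))"
  by (cases \<tau>) auto

lemma hd_tw_D: "hd (tw t) = D \<longleftrightarrow> t = TD" by (cases t) auto

lemma compress_cat: "good \<tau> \<Longrightarrow> compress (cat \<tau>) = Xw \<tau>"
proof (induction \<tau>)
  case Nil then show ?case by simp
next
  case (Cons t \<tau>)
  have g: "good \<tau>" using Cons.prems by (simp add: good_Cons)
  show ?case
  proof (cases t)
    case TU
    have "cat \<tau> = [] \<or> hd (cat \<tau>) \<noteq> D"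
    proof (cases "\<tau> = []")
      case False
      then have "hd \<tau> \<noteq> TD" using Cons.prems TU by (simp add: good_Cons)
      then show ?thesis using False hd_cat hd_tw_D by simp
    qed simp
    then show ?thesis using TU Cons.IH[OF g] compress_U by simp
  qed (use Cons.IH[OF g] in auto)
qed

lemma Xw_rev: "Xw (rev xs) = rev (Xw xs)"
proof (induction xs)
  case (Cons x xs)
  have "Xw (x # xs) = Xw [x] @ Xw xs" using Xw_append[of "[x]" xs] by simp
  moreover have "rev (Xw [x]) = Xw [x]" by (cases x) auto
  ultimately show ?case using Cons by simp
qed simp

lemma Xw_map_tf: "Xw (map tf xs) = Yw xs"
proof (induction xs)
  case (Cons x xs) then show ?case by (cases x) auto
qed simp

lemma good_rev_tf: "good (rev (map tf xs)) = good xs"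
proof (induction xs)
  case Nil then show ?case by simp
next
  case (Cons x xs)
  show ?case
  proof (cases xs)
    case Nil then show ?thesis by simp
  next
    case (Cons y ys)
    have "last (rev (map tf xs)) = tf (hd xs)" using Cons by (simp add: last_rev)
    then show ?thesis using Cons.IH Cons by (auto simp: good_append good_Cons) (cases x; cases y; simp)+
  qed
qed

lemma good_path: assumes v: "vp n \<alpha> \<mu>" shows "good (\<alpha> @ \<mu> @ rev (map tf \<alpha>))"
proof -
  have gd: "good \<alpha>" and mu: "\<mu> = [] \<or> \<mu> = [TH] \<or> \<mu> = [TR]" and lst: "\<mu> = [] \<longrightarrow> \<alpha> \<noteq> [] \<longrightarrow> last \<alpha> \<noteq> TU"
    using v unfolding vp_def by auto
  have gr: "good (rev (map tf \<alpha>))" using gd good_rev_tf by simp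
  have hr: "\<alpha> \<noteq> [] \<Longrightarrow> hd (rev (map tf \<alpha>)) = tf (last \<alpha>)" by (simp add: hd_rev last_map)
  have g2: "good (\<mu> @ rev (map tf \<alpha>))" using mu gr by (auto simp: good_append good_Cons)
  show ?thesis unfolding good_append[of \<alpha>] using gd g2
  proof (intro conjI; (simp; fail)?)
    show "\<alpha> \<noteq> [] \<longrightarrow> \<mu> @ rev (map tf \<alpha>) \<noteq> [] \<longrightarrow> \<not> (last \<alpha> = TU \<and> hd (\<mu> @ rev (map tf \<alpha>)) = TD)"
    proof (intro impI)
      assume a: "\<alpha> \<noteq> []"
      show "\<not> (last \<alpha> = TU \<and> hd (\<mu> @ rev (map tf \<alpha>)) = TD)"
      proof (cases "\<mu> = []")
        case True then show ?thesis using lst a hr by (cases "last \<alpha>") auto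
      next
        case False then show ?thesis using mu by auto
      qed
    qed
  qed
qed

lemma word'_path: assumes v: "vp n \<alpha> \<mu>" shows "word' (path \<alpha> \<mu>) = wd \<alpha> \<mu>"
proof -
  let ?\<tau> = "\<alpha> @ \<mu> @ rev (map tf \<alpha>)"
  have g: "good (?\<tau> @ [TH])" unfolding good_append[of ?\<tau> "[TH]"] using good_path[OF v] by simp
  have "word' (path \<alpha> \<mu>) = compress (cat (?\<tau> @ [TH]))" unfolding word'_def path_def by simp
  also have "\<dots> = Xw (?\<tau> @ [TH])" using compress_cat[OF g] .
  also have "\<dots> = wd \<alpha> \<mu>" unfolding wd_def core_def by (simp add: Xw_rev Xw_map_tf)
  finally show ?thesis .
qed

lemma height_append[simp]: "height (xs @ ys) = height xs + height ys"
  unfolding height_def by simp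
lemma height_nil[simp]: "height [] = 0" unfolding height_def by simp
lemma height_tw[simp]: "height (tw t) = tr t" unfolding height_def by (cases t) auto
lemma height_cat: "height (cat \<tau>) = ht \<tau>" by (induction \<tau>) auto

lemma width_cat: "sum_list (map step_width (cat \<tau>)) = widl \<tau>"
proof (induction \<tau>)
  case (Cons t \<tau>) then show ?case by (cases t) auto
qed simp

lemma height_take_tw: "k < length (tw t) \<Longrightarrow> 0 \<le> height (take k (tw t))"
  by (cases t; cases k) (auto simp: height_def)

lemma pref_iff: "0 \<le> h \<Longrightarrow> balh h \<tau> \<longleftrightarrow> (\<forall>k. 0 \<le> h + height (take k (cat \<tau>)))"
proof (induction \<tau> arbitrary: h)
  case Nil then show ?case by simp
next
  case (Cons t \<tau>)
  have split: "height (take k (cat (t # \<tau>))) = height (take k (tw t)) + height (take (k - length (tw t)) (cat \<tau>))" for k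
    by (simp add: take_append)
  show ?case
  proof
    assume b: "balh h (t # \<tau>)"
    then have h1: "0 \<le> h + tr t" and b2: "balh (h + tr t) \<tau>" by auto
    have IH: "\<forall>k. 0 \<le> h + tr t + height (take k (cat \<tau>))" using Cons.IH[OF h1] b2 by simp
    show "\<forall>k. 0 \<le> h + height (take k (cat (t # \<tau>)))"
    proof
      fix k
      show "0 \<le> h + height (take k (cat (t # \<tau>)))"
      proof (cases "k < length (tw t)")
        case True
        then have "k - length (tw t) = 0" by simp
        then show ?thesis using split[of k] height_take_tw[OF True] Cons.prems by simp
      next
        case False
        then have "take k (tw t) = tw t" by simp
        then show ?thesis using split[of k] IH by (simp add: add.assoc)
      qed
    qed
  next
    assume a: "\<forall>k. 0 \<le> h + height (take k (cat (t # \<tau>)))"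
    have "0 \<le> h + height (take (length (tw t)) (cat (t # \<tau>)))" using a by blast
    then have h1: "0 \<le> h + tr t" by simp
    have "\<forall>k. 0 \<le> h + tr t + height (take k (cat \<tau>))"
    proof
      fix k
      have "0 \<le> h + height (take (length (tw t) + k) (cat (t # \<tau>)))" using a by blast
      then show "0 \<le> h + tr t + height (take k (cat \<tau>))" by (simp add: add.assoc)
    qed
    then have "balh (h + tr t) \<tau>" using Cons.IH[OF h1] by simp
    then show "balh h (t # \<tau>)" using h1 by simp
  qed
qed

lemma balh_nonneg: "balh h xs \<Longrightarrow> 0 \<le> h \<Longrightarrow> 0 \<le> h + ht xs"
proof (induction xs arbitrary: h)
  case (Cons t xs)
  have "0 \<le> h + tr t + ht xs" using Cons.IH[of "h + tr t"] Cons.prems by simp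
  then show ?case by simp
qed simp

lemma tr_tf[simp]: "tr (tf t) = - tr t" by (cases t) auto

lemma balh_rev: "balh 0 xs \<Longrightarrow> balh (ht xs) (rev (map tf xs))"
proof (induction xs rule: rev_induct)
  case Nil then show ?case by simp
next
  case (snoc t ys)
  have b: "balh 0 ys" "0 \<le> ht ys + tr t" using snoc.prems by (auto simp: balh_append)
  have "0 \<le> ht ys" using balh_nonneg[OF b(1)] by simp
  then show ?case using snoc.IH[OF b(1)] b(2) by simp
qed

lemma mirror_cat: "mirror (cat \<tau>) = cat (rev (map tf \<tau>))"
proof (induction \<tau>)
  case (Cons t \<tau>)
  have "rev (map flip_step (tw t)) = tw (tf t)" by (cases t) auto
  then show ?case using Cons unfolding mirror_def by simp
qed (simp add: mirror_def)

lemma ht_rev_tf: "ht (rev (map tf xs)) = - ht xs"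
  unfolding ht_def by (induction xs) auto

lemma widl_rev_tf: "widl (rev (map tf xs)) = widl xs"
proof -
  have "wid (tf t) = wid t" for t by (cases t) auto
  then show ?thesis unfolding widl_def by (simp add: rev_map[symmetric] sum_list_rev comp_def)
qed

lemma path_Sh: assumes v: "vp n \<alpha> \<mu>" shows "path \<alpha> \<mu> \<in> Sh n"
proof -
  let ?\<tau> = "\<alpha> @ \<mu> @ rev (map tf \<alpha>)"
  have mu: "\<mu> = [] \<or> \<mu> = [TH] \<or> \<mu> = [TR]" and bal: "balh 0 \<alpha>" and wid: "2 * widl \<alpha> + widl \<mu> = 2 * n"
    using v unfolding vp_def by auto
  have hm: "ht \<mu> = 0" using mu by auto
  have wm: "widl \<mu> = widl \<mu>" ..
  have b: "balh 0 ?\<tau>"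
  proof -
    have "0 \<le> ht \<alpha>" using balh_nonneg[OF bal] by simp
    then have "balh (ht \<alpha>) \<mu>" using mu by auto
    moreover have "balh (ht \<alpha> + ht \<mu>) (rev (map tf \<alpha>))" using balh_rev[OF bal] hm by simp
    ultimately show ?thesis using bal by (simp add: balh_append)
  qed
  have "schroeder n (path \<alpha> \<mu>)"
    unfolding schroeder_def path_def
  proof (intro conjI)
    show "sum_list (map step_width (cat ?\<tau>)) = 2 * n" unfolding width_cat using wid widl_rev_tf by simp
    show "height (cat ?\<tau>) = 0" unfolding height_cat using hm ht_rev_tf by simp
    show "\<forall>k\<le>length (cat ?\<tau>). 0 \<le> height (take k (cat ?\<tau>))" using pref_iff[of 0 ?\<tau>] b by simp
  qed
  moreover have "symmetric_path (path \<alpha> \<mu>)"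
  proof -
    have "rev (map tf \<mu>) = \<mu>" using mu by auto
    then have "rev (map tf ?\<tau>) = ?\<tau>" by (simp add: rev_map)
    then show ?thesis unfolding symmetric_path_def path_def mirror_cat by simp
  qed
  ultimately show ?thesis unfolding Sh_def by simp
qed

fun tokenize :: "step list \<Rightarrow> tok list" where
  "tokenize [] = []"
| "tokenize (U # D # xs) = TR # tokenize xs"
| "tokenize (U # xs) = TU # tokenize xs"
| "tokenize (D # xs) = TD # tokenize xs"
| "tokenize (H # xs) = TH # tokenize xs"

lemma cat_tok: "cat (tokenize p) = p"
  by (induction p rule: tokenize.induct) auto

lemma tok_hd: "tokenize p \<noteq> [] \<Longrightarrow> hd (tokenize p) = TD \<Longrightarrow> p \<noteq> [] \<and> hd p = D"
  by (induction p rule: tokenize.induct) auto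

lemma good_tok: "good (tokenize p)"
  by (induction p rule: tokenize.induct) (auto simp: good_Cons dest!: tok_hd)

lemma tok_U: assumes "ys = [] \<or> hd ys \<noteq> D" shows "tokenize (U # ys) = TU # tokenize ys"
proof (cases ys)
  case (Cons a ys') then show ?thesis using assms by (cases a) auto
qed simp

lemma tok_cat: "good \<tau> \<Longrightarrow> tokenize (cat \<tau>) = \<tau>"
proof (induction \<tau>)
  case Nil then show ?case by simp
next
  case (Cons t \<tau>)
  have g: "good \<tau>" using Cons.prems by (simp add: good_Cons)
  show ?case
  proof (cases t)
    case TU
    have "cat \<tau> = [] \<or> hd (cat \<tau>) \<noteq> D"
    proof (cases "\<tau> = []")
      case False
      then have "hd \<tau> \<noteq> TD" using Cons.prems TU by (simp add: good_Cons)
      then show ?thesis using False hd_cat hd_tw_D by simp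
    qed simp
    then show ?thesis using TU Cons.IH[OF g] tok_U by simp
  qed (use Cons.IH[OF g] in auto)
qed

lemma split_sym: assumes eq: "\<tau> = rev (map tf \<tau>)"
  shows "\<exists>\<alpha> \<mu>. \<tau> = \<alpha> @ \<mu> @ rev (map tf \<alpha>) \<and> (\<mu> = [] \<or> \<mu> = [TH] \<or> \<mu> = [TR])"
proof -
  define L where "L = length \<tau>"
  define h where "h = L div 2"
  define \<alpha> where "\<alpha> = take h \<tau>"
  have d: "drop (L - h) \<tau> = rev (map tf \<alpha>)"
  proof -
    have "drop (L - h) \<tau> = drop (L - h) (rev (map tf \<tau>))" using arg_cong[OF eq, of "drop (L - h)"] .
    also have "\<dots> = rev (take h (map tf \<tau>))" unfolding L_def by (simp add: drop_rev h_def L_def)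
    finally show ?thesis unfolding \<alpha>_def by (simp add: take_map)
  qed
  show ?thesis
  proof (cases "even L")
    case True
    then have "L - h = h" unfolding h_def by auto
    then have "\<tau> = \<alpha> @ [] @ rev (map tf \<alpha>)" using d unfolding \<alpha>_def by (metis append_Nil append_take_drop_id)
    then show ?thesis by blast
  next
    case False
    then have Lh: "L - h = Suc h" "h < L" unfolding h_def by presburger+
    define m where "m = \<tau> ! h"
    have "\<tau> = take h \<tau> @ \<tau> ! h # drop (Suc h) \<tau>" using Lh(2) unfolding L_def by (simp add: id_take_nth_drop)
    then have t: "\<tau> = \<alpha> @ [m] @ rev (map tf \<alpha>)" using d Lh unfolding \<alpha>_def m_def by simp
    have "m = rev (map tf \<tau>) ! h" using arg_cong[OF eq, of "\<lambda>x. x ! h"] unfolding m_def .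
    also have "\<dots> = tf (\<tau> ! (L - 1 - h))" using Lh unfolding L_def by (simp add: rev_nth)
    also have "L - 1 - h = h" using Lh by simp
    finally have "m = tf m" unfolding m_def by simp
    then have "m = TH \<or> m = TR" by (cases m) auto
    then show ?thesis using t by blast
  qed
qed

lemma Sh_path: assumes p: "p \<in> Sh n" shows "\<exists>\<alpha> \<mu>. vp n \<alpha> \<mu> \<and> p = path \<alpha> \<mu>"
proof -
  define \<tau> where "\<tau> = tokenize p"
  have pc: "p = cat \<tau>" unfolding \<tau>_def by (simp add: cat_tok)
  have g: "good \<tau>" unfolding \<tau>_def by (rule good_tok)
  have sch: "schroeder n p" and sym: "mirror p = p" using p unfolding Sh_def symmetric_path_def by auto
  have "tokenize (mirror p) = rev (map tf \<tau>)"
    unfolding pc mirror_cat by (rule tok_cat) (simp add: good_rev_tf g)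
  then have eq: "\<tau> = rev (map tf \<tau>)" using sym unfolding \<tau>_def by simp
  obtain \<alpha> \<mu> where t: "\<tau> = \<alpha> @ \<mu> @ rev (map tf \<alpha>)" and mu: "\<mu> = [] \<or> \<mu> = [TH] \<or> \<mu> = [TR]"
    using split_sym[OF eq] by blast
  have "vp n \<alpha> \<mu>"
    unfolding vp_def
  proof (intro conjI)
    show "good \<alpha>" using g t by (simp add: good_append)
    show "\<mu> = [] \<or> \<mu> = [TH] \<or> \<mu> = [TR]" using mu .
    show "\<mu> = [] \<longrightarrow> \<alpha> \<noteq> [] \<longrightarrow> last \<alpha> \<noteq> TU"
    proof (intro impI)
      assume "\<mu> = []" "\<alpha> \<noteq> []"
      then have "good (\<alpha> @ rev (map tf \<alpha>))" "hd (rev (map tf \<alpha>)) = tf (last \<alpha>)" "rev (map tf \<alpha>) \<noteq> []"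
        using g t by (simp_all add: hd_rev last_map)
      then show "last \<alpha> \<noteq> TU" using \<open>\<alpha> \<noteq> []\<close> by (auto simp: good_append)
    qed
    have "\<forall>k. 0 \<le> 0 + height (take k (cat \<tau>))"
    proof
      fix k
      show "0 \<le> 0 + height (take k (cat \<tau>))"
      proof (cases "k \<le> length p")
        case True then show ?thesis using sch pc unfolding schroeder_def by simp
      next
        case False
        then have "take k (cat \<tau>) = take (length p) (cat \<tau>)" using pc by simp
        then show ?thesis using sch pc unfolding schroeder_def by simp
      qed
    qed
    then have "balh 0 \<tau>" using pref_iff[of 0 \<tau>] by simp
    then show "balh 0 \<alpha>" using t by (simp add: balh_append)
    have "sum_list (map step_width p) = 2 * n" using sch unfolding schroeder_def by simp
    then show "2 * widl \<alpha> + widl \<mu> = 2 * n" using t pc width_cat widl_rev_tf by simp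
  qed
  moreover have "p = path \<alpha> \<mu>" unfolding path_def using pc t by simp
  ultimately show ?thesis by blast
qed


lemma inv_char: "\<pi> \<in> Inv_avoid (n + 1) {[1,2,3,4], [1,2,4,3]} \<longleftrightarrow>
   \<pi> permutes {1..n+1} \<and> (\<forall>i. \<pi> (\<pi> i) = i) \<and> nice (n+1) \<pi>"
  unfolding Inv_avoid_def using avoid_iff by auto

lemma phi_path: "vp n \<alpha> \<mu> \<Longrightarrow> phi (path \<alpha> \<mu>) = rb (wd \<alpha> \<mu>)"
  using phi_rb word'_path by simp

lemma img: assumes "vp n \<alpha> \<mu>" shows "rb (wd \<alpha> \<mu>) \<in> Inv_avoid (n + 1) {[1,2,3,4], [1,2,4,3]}"
proof -
  have l: "length (wd \<alpha> \<mu>) = n + 1" using wd_length[OF assms] .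
  have "nice (n+1) (rb (wd \<alpha> \<mu>))" using vp_GW[OF assms] l unfolding GW_def by simp
  then show ?thesis unfolding inv_char using rb_permutes[of "wd \<alpha> \<mu>"] rb_invol l by simp
qed

theorem theorem2p1:
  fixes n :: nat
  shows "phi ` Sh n \<subseteq> Inv_avoid (n + 1) {[1,2,3,4], [1,2,4,3]} \<and>
         bij_betw phi (Sh n) (Inv_avoid (n + 1) {[1,2,3,4], [1,2,4,3]})"
proof -
  let ?I = "Inv_avoid (n + 1) {[1,2,3,4], [1,2,4,3]}"
  have sub: "phi ` Sh n \<subseteq> ?I"
  proof
    fix x assume "x \<in> phi ` Sh n"
    then obtain p where p: "p \<in> Sh n" "x = phi p" by blast
    obtain \<alpha> \<mu> where v: "vp n \<alpha> \<mu>" "p = path \<alpha> \<mu>" using Sh_path[OF p(1)] by blast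
    show "x \<in> ?I" using img[OF v(1)] phi_path[OF v(1)] p(2) v(2) by simp
  qed
  have inj: "inj_on phi (Sh n)"
  proof
    fix p1 p2 assume p: "p1 \<in> Sh n" "p2 \<in> Sh n" "phi p1 = phi p2"
    obtain \<alpha>1 \<mu>1 where v1: "vp n \<alpha>1 \<mu>1" "p1 = path \<alpha>1 \<mu>1" using Sh_path[OF p(1)] by blast
    obtain \<alpha>2 \<mu>2 where v2: "vp n \<alpha>2 \<mu>2" "p2 = path \<alpha>2 \<mu>2" using Sh_path[OF p(2)] by blast
    define q1 where "q1 = wd \<alpha>1 \<mu>1"
    define q2 where "q2 = wd \<alpha>2 \<mu>2"
    have r: "rb q1 = rb q2" using p(3) phi_path[OF v1(1)] phi_path[OF v2(1)] v1(2) v2(2) unfolding q1_def q2_def by simp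
    have l: "length q1 = n + 1" "length q2 = n + 1" using wd_length[OF v1(1)] wd_length[OF v2(1)] unfolding q1_def q2_def by auto
    have c: "cl q1" "cl q2" using vp_GW[OF v1(1)] vp_GW[OF v2(1)] unfolding q1_def q2_def GW_def by auto
    have "q1 = q2"
    proof (rule nth_equalityI)
      show "length q1 = length q2" using l by simp
      fix i assume i: "i < length q1"
      have i1: "1 \<le> Suc i" "Suc i \<le> length q1" "Suc i \<le> length q2" using i l by auto
      have "q1 ! (Suc i - 1) = cls (ba (length q1) (rb q1) (Suc i))" using c(1) i1(1,2) unfolding cl_def by blast
      moreover have "q2 ! (Suc i - 1) = cls (ba (length q2) (rb q2) (Suc i))" using c(2) i1(1,3) unfolding cl_def by blast
      ultimately show "q1 ! i = q2 ! i" using r l by simp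
    qed
    then have "\<alpha>1 = \<alpha>2 \<and> \<mu>1 = \<mu>2" using wd_inj[OF v1(1) v2(1)] unfolding q1_def q2_def by simp
    then show "p1 = p2" using v1(2) v2(2) by simp
  qed
  have sup: "?I \<subseteq> phi ` Sh n"
  proof
    fix \<pi> assume "\<pi> \<in> ?I"
    then have pi: "\<pi> permutes {1..n+1}" "\<forall>i. \<pi> (\<pi> i) = i" "nice (n+1) \<pi>" unfolding inv_char by auto
    obtain \<alpha> \<mu> where v: "vp (n + 1 - 1) \<alpha> \<mu>" "rb (wd \<alpha> \<mu>) = \<pi>" using surj_main[OF _ pi] by auto
    have v': "vp n \<alpha> \<mu>" using v(1) by simp
    have "path \<alpha> \<mu> \<in> Sh n" using path_Sh[OF v'] .
    moreover have "phi (path \<alpha> \<mu>) = \<pi>" using phi_path[OF v'] v(2) by simp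
    ultimately show "\<pi> \<in> phi ` Sh n" by blast
  qed
  show ?thesis using sub inj sup unfolding bij_betw_def by blast
qed

end
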